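(* Let $S$ be a profinite semigroup and let $\mathscr F$ be a fundamental system of entourages for $S$ consisting of open fully invariant congruences. For $\rho\in\mathscr F$, let $r_\rho\colon \operatorname{End} S\to \operatorname{End}(S/\rho)$ be the natural map sending $f$ to the induced endomorphism $[s]_\rho\mapsto [f(s)]_\rho$. Then $r_\rho$ is continuous (with $\operatorname{End} S$ carrying the compact-open topology), so its kernel $\widehat\rho=\{(f,g): r_\rho(f)=r_\rho(g)\}$ is an open congruence on $\operatorname{End} S$. Setting $\widehat{\mathscr F}=\{\widehat\rho\mid \rho\in\mathscr F\}$, one has $$\operatorname{End} S\cong \varprojlim_{\widehat\rho\in\widehat{\mathscr F}} \operatorname{End} S/\widehat\rho .$$ Analogously, if $\mathscr F$ is a fundamental system of entourages for $S$ consisting of open characteristic congruences, then the corresponding maps $r_\rho\colon\operatorname{Aut} S\to\operatorname{Aut}(S/\rho)$ are continuous, their kernels $\widehat\rho$ are open congruences on $\operatorname{Aut} S$, and $\operatorname{Aut} S\cong\varprojlim_{\widehat\rho\in\widehat{\mathscr F}}\operatorname{Aut} S/\widehat\rho$.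
   Context: $\operatorname{End} S$ is the monoid of continuous endomorphisms and $\operatorname{Aut} S$ the group of continuous automorphisms of $S$, with the compact-open topology. A congruence $\rho$ on $S$ is open if it is an open subset of $S\times S$; fully invariant if for every continuous endomorphism $f$ of $S$, $(x,y)\in\rho$ implies $(f(x),f(y))\in\rho$; characteristic if the same holds for every continuous automorphism $f$. A fundamental system of entourages for $S$ is a family of such congruences such that every open congruence on $S$ contains one of them. The projective limit is taken over $\widehat{\mathscr F}$ ordered by inclusion, with the natural quotient maps, and the isomorphism is induced by the canonical maps $\operatorname{End} S\to \operatorname{End} S/\widehat\rho$. *)

theory Defs
  imports "HOL-Analysis.Analysis"
begin

definition topsemigroup :: "'a topology \<Rightarrow> ('a \<Rightarrow> 'a \<Rightarrow> 'a) \<Rightarrow> bool" where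
  "topsemigroup T m \<longleftrightarrow>
     (\<forall>x\<in>topspace T. \<forall>y\<in>topspace T. m x y \<in> topspace T) \<and>
     (\<forall>x\<in>topspace T. \<forall>y\<in>topspace T. \<forall>z\<in>topspace T. m (m x y) z = m x (m y z)) \<and>
     continuous_map (prod_topology T T) T (\<lambda>(x, y). m x y)"

definition congruence :: "'a set \<Rightarrow> ('a \<Rightarrow> 'a \<Rightarrow> 'a) \<Rightarrow> 'a rel \<Rightarrow> bool" where
  "congruence A m \<rho> \<longleftrightarrow> equiv A \<rho> \<and>
     (\<forall>(x, y)\<in>\<rho>. \<forall>z\<in>A. (m z x, m z y) \<in> \<rho> \<and> (m x z, m y z) \<in> \<rho>)"

definition open_congruence :: "'a topology \<Rightarrow> ('a \<Rightarrow> 'a \<Rightarrow> 'a) \<Rightarrow> 'a rel \<Rightarrow> bool" where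
  "open_congruence T m \<rho> \<longleftrightarrow> congruence (topspace T) m \<rho> \<and> openin (prod_topology T T) \<rho>"

text \<open>Profinite semigroup: compact Hausdorff topological semigroup which is residually
  finite, i.e. open congruences (which have finite index, by compactness) separate points.\<close>

definition profinite :: "'a topology \<Rightarrow> ('a \<Rightarrow> 'a \<Rightarrow> 'a) \<Rightarrow> bool" where
  "profinite T m \<longleftrightarrow> topsemigroup T m \<and> compact_space T \<and> Hausdorff_space T \<and>
     (\<forall>x\<in>topspace T. \<forall>y\<in>topspace T. x \<noteq> y \<longrightarrow>
        (\<exists>\<rho>. open_congruence T m \<rho> \<and> (x, y) \<notin> \<rho>))"

definition endo :: "'a topology \<Rightarrow> ('a \<Rightarrow> 'a \<Rightarrow> 'a) \<Rightarrow> ('a \<Rightarrow> 'a) set" where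
  "endo T m = {f. continuous_map T T f \<and> f \<in> extensional (topspace T) \<and>
      (\<forall>x\<in>topspace T. \<forall>y\<in>topspace T. f (m x y) = m (f x) (f y))}"

definition aut :: "'a topology \<Rightarrow> ('a \<Rightarrow> 'a \<Rightarrow> 'a) \<Rightarrow> ('a \<Rightarrow> 'a) set" where
  "aut T m = {f \<in> endo T m. homeomorphic_map T T f}"

definition compact_open :: "'a topology \<Rightarrow> ('a \<Rightarrow> 'a) set \<Rightarrow> ('a \<Rightarrow> 'a) topology" where
  "compact_open T E = subtopology
     (topology_generated_by {{f. f ` K \<subseteq> U} | K U. compactin T K \<and> openin T U}) E"

definition comp_op :: "'a topology \<Rightarrow> ('a \<Rightarrow> 'a) \<Rightarrow> ('a \<Rightarrow> 'a) \<Rightarrow> ('a \<Rightarrow> 'a)" where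
  "comp_op T f g = compose (topspace T) f g"

definition fully_invariant :: "'a topology \<Rightarrow> ('a \<Rightarrow> 'a \<Rightarrow> 'a) \<Rightarrow> 'a rel \<Rightarrow> bool" where
  "fully_invariant T m \<rho> \<longleftrightarrow> (\<forall>f\<in>endo T m. \<forall>(x, y)\<in>\<rho>. (f x, f y) \<in> \<rho>)"

definition characteristic :: "'a topology \<Rightarrow> ('a \<Rightarrow> 'a \<Rightarrow> 'a) \<Rightarrow> 'a rel \<Rightarrow> bool" where
  "characteristic T m \<rho> \<longleftrightarrow> (\<forall>f\<in>aut T m. \<forall>(x, y)\<in>\<rho>. (f x, f y) \<in> \<rho>)"

definition fundamental_system :: "'a topology \<Rightarrow> ('a \<Rightarrow> 'a \<Rightarrow> 'a) \<Rightarrow> 'a rel set \<Rightarrow> bool" where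
  "fundamental_system T m \<F> \<longleftrightarrow> (\<forall>\<rho>\<in>\<F>. open_congruence T m \<rho>) \<and>
     (\<forall>\<sigma>. open_congruence T m \<sigma> \<longrightarrow> (\<exists>\<rho>\<in>\<F>. \<rho> \<subseteq> \<sigma>))"

definition quot_top :: "'a topology \<Rightarrow> 'a rel \<Rightarrow> 'a set topology" where
  "quot_top T \<rho> = topology (\<lambda>U. U \<subseteq> topspace T // \<rho> \<and> openin T (\<Union>U))"

definition qmult :: "'a rel \<Rightarrow> ('a \<Rightarrow> 'a \<Rightarrow> 'a) \<Rightarrow> 'a set \<Rightarrow> 'a set \<Rightarrow> 'a set" where
  "qmult \<rho> m A B = \<rho> `` {m (SOME a. a \<in> A) (SOME b. b \<in> B)}"

definition r_map :: "'a topology \<Rightarrow> 'a rel \<Rightarrow> ('a \<Rightarrow> 'a) \<Rightarrow> ('a set \<Rightarrow> 'a set)" where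
  "r_map T \<rho> f = (\<lambda>C\<in>topspace T // \<rho>. \<rho> `` {f (SOME s. s \<in> C)})"

definition hatrel :: "'a topology \<Rightarrow> 'a rel \<Rightarrow> ('a \<Rightarrow> 'a) set \<Rightarrow> ('a \<Rightarrow> 'a) rel" where
  "hatrel T \<rho> E = {(f, g). f \<in> E \<and> g \<in> E \<and> r_map T \<rho> f = r_map T \<rho> g}"

text \<open>Projective limit of the quotients E / R, R ranging over a family H ordered by
  inclusion, with the natural maps E/R1 \<rightarrow> E/R2 (for R1 \<subseteq> R2), and its topology
  (subspace of the product of the quotient spaces).\<close>

definition projlim :: "('b \<Rightarrow> 'b) set \<Rightarrow> ('b \<Rightarrow> 'b) rel set \<Rightarrow> (('b \<Rightarrow> 'b) rel \<Rightarrow> ('b \<Rightarrow> 'b) set) set" where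
  "projlim E H = {x \<in> (\<Pi>\<^sub>E R\<in>H. E // R).
      \<forall>R1\<in>H. \<forall>R2\<in>H. R1 \<subseteq> R2 \<longrightarrow> R2 `` (x R1) = x R2}"

definition projlim_top :: "('b \<Rightarrow> 'b) topology \<Rightarrow> ('b \<Rightarrow> 'b) rel set
    \<Rightarrow> (('b \<Rightarrow> 'b) rel \<Rightarrow> ('b \<Rightarrow> 'b) set) topology" where
  "projlim_top C H = subtopology (product_topology (\<lambda>R. quot_top C R) H) (projlim (topspace C) H)"

definition canon :: "('b \<Rightarrow> 'b) rel set \<Rightarrow> ('b \<Rightarrow> 'b) \<Rightarrow> (('b \<Rightarrow> 'b) rel \<Rightarrow> ('b \<Rightarrow> 'b) set)" where
  "canon H f = (\<lambda>R\<in>H. R `` {f})"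

text \<open>The full conclusion, for E = End S (resp. Aut S) and Eq rho = End(S/rho)
  (resp. Aut(S/rho)): each r_rho maps E into Eq rho continuously (compact-open topologies),
  its kernel is an open congruence on the monoid E, and the canonical map is an isomorphism
  of topological monoids from E onto the projective limit of the E / kernel.\<close>

definition projlim_conclusion :: "'a topology \<Rightarrow> 'a rel set \<Rightarrow> ('a \<Rightarrow> 'a) set
    \<Rightarrow> ('a rel \<Rightarrow> ('a set \<Rightarrow> 'a set) set) \<Rightarrow> bool" where
  "projlim_conclusion T \<F> E Eq \<longleftrightarrow>
    (\<forall>\<rho>\<in>\<F>. continuous_map (compact_open T E) (compact_open (quot_top T \<rho>) (Eq \<rho>)) (r_map T \<rho>)
       \<and> open_congruence (compact_open T E) (comp_op T) (hatrel T \<rho> E)) \<and>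
    (let H = (\<lambda>\<rho>. hatrel T \<rho> E) ` \<F>; C = compact_open T E in
       bij_betw (canon H) E (projlim E H) \<and>
       homeomorphic_map C (projlim_top C H) (canon H) \<and>
       (\<forall>f\<in>E. \<forall>g\<in>E. canon H (comp_op T f g) =
            (\<lambda>R\<in>H. qmult R (comp_op T) (canon H f R) (canon H g R))) \<and>
       canon H (restrict id (topspace T)) = (\<lambda>R\<in>H. R `` {restrict id (topspace T)}))"

end

theory Submission
  imports Defs
begin

lemma oc_equiv: "open_congruence T m \<rho> \<Longrightarrow> equiv (topspace T) \<rho>"
  by (simp add: open_congruence_def congruence_def)

lemma oc_sub: "open_congruence T m \<rho> \<Longrightarrow> \<rho> \<subseteq> topspace T \<times> topspace T"
  using oc_equiv equiv_type by blast

lemma oc_comp: "open_congruence T m \<rho> \<Longrightarrow> (x,y) \<in> \<rho> \<Longrightarrow> z \<in> topspace T \<Longrightarrow>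
   (m z x, m z y) \<in> \<rho> \<and> (m x z, m y z) \<in> \<rho>"
  unfolding open_congruence_def congruence_def by blast

lemma oc_class_open:
  assumes "open_congruence T m \<rho>" "s \<in> topspace T"
  shows "openin T (\<rho>``{s})"
proof -
  have c: "continuous_map T (prod_topology T T) (\<lambda>t. (s,t))"
    using assms(2) by (simp add: continuous_map_pairwise o_def)
  have "openin (prod_topology T T) \<rho>" using assms(1) open_congruence_def by blast
  from openin_continuous_map_preimage[OF c this]
  have "openin T {t \<in> topspace T. (s,t) \<in> \<rho>}" .
  moreover have "{t \<in> topspace T. (s,t) \<in> \<rho>} = \<rho>``{s}" using oc_sub[OF assms(1)] by auto
  ultimately show ?thesis by simp
qed

lemma oc_class_closed:
  assumes "open_congruence T m \<rho>" "s \<in> topspace T"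
  shows "closedin T (\<rho>``{s})"
proof -
  have e: "equiv (topspace T) \<rho>" using oc_equiv[OF assms(1)] .
  have "topspace T - \<rho>``{s} = \<Union>{\<rho>``{t} | t. t \<in> topspace T \<and> (s,t) \<notin> \<rho>}"
    using e unfolding equiv_def refl_on_def sym_def trans_def by blast
  moreover have "openin T (\<Union>{\<rho>``{t} | t. t \<in> topspace T \<and> (s,t) \<notin> \<rho>})"
    using oc_class_open[OF assms(1)] by (intro openin_Union) auto
  moreover have "\<rho>``{s} \<subseteq> topspace T" using oc_sub[OF assms(1)] by auto
  ultimately show ?thesis by (simp add: closedin_def)
qed

lemma oc_Int:
  assumes "open_congruence T m \<rho>1" "open_congruence T m \<rho>2"
  shows "open_congruence T m (\<rho>1 \<inter> \<rho>2)"
proof -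
  have e: "equiv (topspace T) (\<rho>1 \<inter> \<rho>2)"
  proof -
    have a: "equiv (topspace T) \<rho>1" "equiv (topspace T) \<rho>2" using assms oc_equiv by blast+
    have "refl_on (topspace T \<inter> topspace T) (\<rho>1 \<inter> \<rho>2)"
      using a by (intro refl_on_Int) (simp_all add: equiv_def)
    moreover have "sym (\<rho>1 \<inter> \<rho>2)" using a by (intro sym_Int) (simp_all add: equiv_def)
    moreover have "trans (\<rho>1 \<inter> \<rho>2)" using a by (intro trans_Int) (simp_all add: equiv_def)
    ultimately show ?thesis using a unfolding equiv_def Int_absorb by blast
  qed
  have o: "openin (prod_topology T T) (\<rho>1 \<inter> \<rho>2)"
    using assms unfolding open_congruence_def by (simp add: openin_Int)
  show ?thesis unfolding open_congruence_def congruence_def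
  proof (intro conjI e o)
    show "\<forall>(x, y)\<in>\<rho>1 \<inter> \<rho>2. \<forall>z\<in>topspace T. (m z x, m z y) \<in> \<rho>1 \<inter> \<rho>2 \<and> (m x z, m y z) \<in> \<rho>1 \<inter> \<rho>2"
      using oc_comp[OF assms(1)] oc_comp[OF assms(2)] by auto
  qed
qed

lemma oc_top:
  assumes "topsemigroup T m"
  shows "open_congruence T m (topspace T \<times> topspace T)"
proof -
  have "openin (prod_topology T T) (topspace T \<times> topspace T)"
    using openin_topspace[of "prod_topology T T"] by simp
  moreover have "equiv (topspace T) (topspace T \<times> topspace T)"
    by (simp add: equiv_def refl_on_def sym_def trans_def)
  ultimately show ?thesis using assms unfolding open_congruence_def congruence_def topsemigroup_def
    by blast
qed

lemma compactin_cover: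
  assumes "compactin X K" "\<And>V. V \<in> \<U> \<Longrightarrow> openin X V" "K \<subseteq> \<Union>\<U>"
  shows "\<exists>\<F>. finite \<F> \<and> \<F> \<subseteq> \<U> \<and> K \<subseteq> \<Union>\<F>"
proof -
  have "\<forall>\<U>. (\<forall>U \<in> \<U>. openin X U) \<and> K \<subseteq> \<Union>\<U> \<longrightarrow> (\<exists>\<F>. finite \<F> \<and> \<F> \<subseteq> \<U> \<and> K \<subseteq> \<Union>\<F>)"
    using assms(1) unfolding compactin_def by (elim conjE)
  then show ?thesis using assms(2,3) by blast
qed

locale pf =
  fixes T :: "'a topology" and m :: "'a \<Rightarrow> 'a \<Rightarrow> 'a" and FF :: "'a rel set"
  assumes prof: "profinite T m" and fund: "fundamental_system T m FF"
begin

abbreviation "S \<equiv> topspace T"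

lemma F_oc: "\<rho> \<in> FF \<Longrightarrow> open_congruence T m \<rho>"
  using fund unfolding fundamental_system_def by blast

lemma F_equiv: "\<rho> \<in> FF \<Longrightarrow> equiv S \<rho>"
  using F_oc oc_equiv by blast

lemma F_below: "open_congruence T m \<sigma> \<Longrightarrow> \<exists>\<rho>\<in>FF. \<rho> \<subseteq> \<sigma>"
  using fund unfolding fundamental_system_def by blast

lemma tsg: "topsemigroup T m" using prof unfolding profinite_def by (elim conjE)
lemma cpt: "compact_space T" using prof unfolding profinite_def by (elim conjE)
lemma sepc: "x \<in> S \<Longrightarrow> y \<in> S \<Longrightarrow> x \<noteq> y \<Longrightarrow> \<exists>\<sigma>. open_congruence T m \<sigma> \<and> (x, y) \<notin> \<sigma>"
  using prof unfolding profinite_def by (elim conjE) blast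

lemma mult_in: "x \<in> S \<Longrightarrow> y \<in> S \<Longrightarrow> m x y \<in> S"
  using tsg unfolding topsemigroup_def by (elim conjE) blast

lemma F_ne: "FF \<noteq> {}"
  using F_below[OF oc_top[OF tsg]] by blast

lemma F_lower_finite: "finite A \<Longrightarrow> A \<subseteq> FF \<Longrightarrow> \<exists>\<rho>\<in>FF. \<forall>\<alpha>\<in>A. \<rho> \<subseteq> \<alpha>"
proof (induction A rule: finite_induct)
  case empty
  then show ?case using F_ne by blast
next
  case (insert a A)
  then obtain \<rho>' where r: "\<rho>' \<in> FF" "\<forall>\<alpha>\<in>A. \<rho>' \<subseteq> \<alpha>" by blast
  have "open_congruence T m (\<rho>' \<inter> a)" using oc_Int F_oc r insert by blast
  then obtain \<rho> where "\<rho> \<in> FF" "\<rho> \<subseteq> \<rho>' \<inter> a" using F_below by blast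
  then show ?case using r by blast
qed

lemma F_sep: "y \<in> S \<Longrightarrow> z \<in> S \<Longrightarrow> (\<And>\<rho>. \<rho> \<in> FF \<Longrightarrow> (y,z) \<in> \<rho>) \<Longrightarrow> y = z"
proof (rule ccontr)
  assume a: "y \<in> S" "z \<in> S" "\<And>\<rho>. \<rho> \<in> FF \<Longrightarrow> (y,z) \<in> \<rho>" "y \<noteq> z"
  then obtain \<sigma> where "open_congruence T m \<sigma>" "(y,z) \<notin> \<sigma>" using sepc by blast
  then obtain \<rho> where "\<rho> \<in> FF" "\<rho> \<subseteq> \<sigma>" using F_below by blast
  then show False using a \<open>(y,z) \<notin> \<sigma>\<close> by blast
qed

lemma F_nbhd_pt:
  assumes U: "openin T U" and y: "y \<in> U"
  shows "\<exists>\<rho>\<in>FF. \<rho>``{y} \<subseteq> U"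
proof -
  have yS: "y \<in> S" using U y openin_subset by blast
  define K where "K = S - U"
  have "closedin T K" unfolding K_def using U by (simp add: closedin_diff)
  then have cK: "compactin T K" using closedin_compact_space cpt by blast
  have "\<forall>z\<in>K. \<exists>r. r \<in> FF \<and> (y,z) \<notin> r"
  proof
    fix z assume z: "z \<in> K"
    then have "z \<noteq> y" "z \<in> S" using y unfolding K_def by auto
    then obtain \<sigma> where "open_congruence T m \<sigma>" "(y,z) \<notin> \<sigma>" using sepc yS by metis
    then obtain \<rho> where "\<rho> \<in> FF" "\<rho> \<subseteq> \<sigma>" using F_below by blast
    then show "\<exists>r. r \<in> FF \<and> (y,z) \<notin> r" using \<open>(y,z) \<notin> \<sigma>\<close> by blast
  qed
  then obtain r where r: "\<And>z. z \<in> K \<Longrightarrow> r z \<in> FF \<and> (y,z) \<notin> r z"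
    using bchoice[of K "\<lambda>z r. r \<in> FF \<and> (y,z) \<notin> r"] by blast
  have KS: "K \<subseteq> S" unfolding K_def by blast
  have "\<forall>V\<in>(\<lambda>z. r z``{z}) ` K. openin T V"
  proof
    fix V assume "V \<in> (\<lambda>z. r z``{z}) ` K"
    then obtain z where z: "z \<in> K" "V = r z``{z}" by blast
    have "r z \<in> FF" using r z(1) by blast
    then show "openin T V" using oc_class_open[OF F_oc] z KS by blast
  qed
  moreover have "K \<subseteq> \<Union>((\<lambda>z. r z``{z}) ` K)"
  proof
    fix z assume z: "z \<in> K"
    have "r z \<in> FF" using r z by blast
    then have "z \<in> r z``{z}" using equiv_class_self[OF F_equiv] z KS by blast
    then show "z \<in> \<Union>((\<lambda>z. r z``{z}) ` K)" using z by blast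
  qed
  ultimately obtain \<F> where F: "finite \<F>" "\<F> \<subseteq> (\<lambda>z. r z``{z}) ` K" "K \<subseteq> \<Union>\<F>"
    using compactin_cover[OF cK, of "(\<lambda>z. r z``{z}) ` K"] by blast
  then obtain K0 where K0: "K0 \<subseteq> K" "finite K0" "\<F> = (\<lambda>z. r z``{z}) ` K0"
    using finite_subset_image[of \<F> "\<lambda>z. r z``{z}" K] by blast
  have "finite (r ` K0)" using K0(2) by simp
  moreover have "r ` K0 \<subseteq> FF" using K0(1) r by blast
  ultimately obtain \<rho> where rho: "\<rho> \<in> FF" "\<forall>z\<in>K0. \<rho> \<subseteq> r z" using F_lower_finite[of "r ` K0"] by auto
  have "\<rho>``{y} \<subseteq> U"
  proof
    fix t assume t: "t \<in> \<rho>``{y}"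
    then have tS: "t \<in> S" using oc_sub[OF F_oc[OF rho(1)]] by auto
    show "t \<in> U"
    proof (rule ccontr)
      assume "t \<notin> U"
      then have "t \<in> K" using tS unfolding K_def by auto
      then obtain z where z: "z \<in> K0" "t \<in> r z``{z}" using F K0 by auto
      have e: "equiv S (r z)" using F_equiv r K0 z by blast
      have "(y,t) \<in> r z" using t rho z by auto
      moreover have "(z,t) \<in> r z" using z by auto
      ultimately have "(y,z) \<in> r z" using e unfolding equiv_def sym_def trans_def by blast
      then show False using r K0 z by blast
    qed
  qed
  then show ?thesis using rho by blast
qed

lemma F_nbhd_cpt:
  assumes K: "compactin T K" and U: "openin T U" and KU: "K \<subseteq> U"
  shows "\<exists>\<rho>\<in>FF. \<rho>``K \<subseteq> U"
proof -
  have "\<forall>y\<in>K. \<exists>r. r \<in> FF \<and> r``{y} \<subseteq> U" using F_nbhd_pt U KU by blast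
  then obtain r where r: "\<And>y. y \<in> K \<Longrightarrow> r y \<in> FF \<and> r y``{y} \<subseteq> U"
    using bchoice[of K "\<lambda>y r. r \<in> FF \<and> r``{y} \<subseteq> U"] by blast
  have KS: "K \<subseteq> S" using K compactin_subset_topspace by blast
  have "\<forall>V\<in>(\<lambda>z. r z``{z}) ` K. openin T V"
  proof
    fix V assume "V \<in> (\<lambda>z. r z``{z}) ` K"
    then obtain z where z: "z \<in> K" "V = r z``{z}" by blast
    have "r z \<in> FF" using r z(1) by blast
    then show "openin T V" using oc_class_open[OF F_oc] z KS by blast
  qed
  moreover have "K \<subseteq> \<Union>((\<lambda>z. r z``{z}) ` K)"
  proof
    fix z assume z: "z \<in> K"
    have "r z \<in> FF" using r z by blast
    then have "z \<in> r z``{z}" using equiv_class_self[OF F_equiv] z KS by blast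
    then show "z \<in> \<Union>((\<lambda>z. r z``{z}) ` K)" using z by blast
  qed
  ultimately obtain \<F> where F: "finite \<F>" "\<F> \<subseteq> (\<lambda>z. r z``{z}) ` K" "K \<subseteq> \<Union>\<F>"
    using compactin_cover[OF K, of "(\<lambda>z. r z``{z}) ` K"] by blast
  then obtain K0 where K0: "K0 \<subseteq> K" "finite K0" "\<F> = (\<lambda>z. r z``{z}) ` K0"
    using finite_subset_image[of \<F> "\<lambda>z. r z``{z}" K] by blast
  have "finite (r ` K0)" using K0(2) by simp
  moreover have "r ` K0 \<subseteq> FF" using K0(1) r by blast
  ultimately obtain \<rho> where rho: "\<rho> \<in> FF" "\<forall>z\<in>K0. \<rho> \<subseteq> r z" using F_lower_finite[of "r ` K0"] by auto
  have "\<rho>``K \<subseteq> U"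
  proof
    fix t assume "t \<in> \<rho>``K"
    then obtain k where k: "k \<in> K" "(k,t) \<in> \<rho>" by auto
    then obtain z where z: "z \<in> K0" "k \<in> r z``{z}" using F K0 by auto
    have e: "equiv S (r z)" using F_equiv r K0 z by blast
    have "(k,t) \<in> r z" using k rho z by auto
    then have "(z,t) \<in> r z" using z e unfolding equiv_def trans_def by blast
    then show "t \<in> U" using r K0 z by blast
  qed
  then show ?thesis using rho by blast
qed

lemma F_limit:
  assumes p: "\<And>\<rho>. \<rho> \<in> FF \<Longrightarrow> p \<rho> \<in> S"
    and compat: "\<And>\<rho>1 \<rho>3. \<rho>1 \<in> FF \<Longrightarrow> \<rho>3 \<in> FF \<Longrightarrow> \<rho>3 \<subseteq> \<rho>1 \<Longrightarrow> (p \<rho>3, p \<rho>1) \<in> \<rho>1"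
  shows "\<exists>y\<in>S. \<forall>\<rho>\<in>FF. (y, p \<rho>) \<in> \<rho>"
proof -
  define \<U> where "\<U> = (\<lambda>\<rho>. \<rho>``{p \<rho>}) ` FF"
  have c1: "\<forall>C\<in>\<U>. closedin T C"
  proof
    fix C assume "C \<in> \<U>"
    then obtain \<rho> where r: "\<rho> \<in> FF" "C = \<rho>``{p \<rho>}" unfolding \<U>_def by blast
    show "closedin T C" using oc_class_closed[OF F_oc[OF r(1)] p[OF r(1)]] r(2) by simp
  qed
  have c2: "\<forall>\<F>. finite \<F> \<and> \<F> \<subseteq> \<U> \<longrightarrow> \<Inter>\<F> \<noteq> {}"
  proof (intro allI impI)
    fix \<F> assume "finite \<F> \<and> \<F> \<subseteq> \<U>"
    then obtain A where A: "A \<subseteq> FF" "finite A" "\<F> = (\<lambda>\<rho>. \<rho>``{p \<rho>}) ` A"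
      unfolding \<U>_def using finite_subset_image[of \<F> "\<lambda>\<rho>. \<rho>``{p \<rho>}" FF] by blast
    then obtain \<rho> where rho: "\<rho> \<in> FF" "\<forall>\<alpha>\<in>A. \<rho> \<subseteq> \<alpha>" using F_lower_finite[of A] by blast
    have "p \<rho> \<in> \<Inter>\<F>"
    proof -
      have "\<forall>\<alpha>\<in>A. p \<rho> \<in> \<alpha>``{p \<alpha>}"
      proof
        fix \<alpha> assume a: "\<alpha> \<in> A"
        then have "(p \<rho>, p \<alpha>) \<in> \<alpha>" using compat rho A by blast
        moreover have "sym \<alpha>" using F_equiv[of \<alpha>] A a unfolding equiv_def by blast
        ultimately show "p \<rho> \<in> \<alpha>``{p \<alpha>}" by (auto dest: symD)
      qed
      then show ?thesis using A by auto
    qed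
    then show "\<Inter>\<F> \<noteq> {}" by blast
  qed
  have "\<Inter>\<U> \<noteq> {}"
    by (rule cpt[unfolded compact_space_fip, rule_format]) (use c1 c2 in simp)
  then obtain y where y: "y \<in> \<Inter>\<U>" by blast
  obtain \<rho>0 where "\<rho>0 \<in> FF" using F_ne by blast
  then have "y \<in> \<rho>0``{p \<rho>0}" using y unfolding \<U>_def by blast
  then have yS: "y \<in> S" using oc_sub[OF F_oc[OF \<open>\<rho>0 \<in> FF\<close>]] by auto
  have "\<forall>\<rho>\<in>FF. (y, p \<rho>) \<in> \<rho>"
  proof
    fix \<rho> assume r: "\<rho> \<in> FF"
    then have "(p \<rho>, y) \<in> \<rho>" using y unfolding \<U>_def by blast
    moreover have "sym \<rho>" using F_equiv[OF r] unfolding equiv_def by blast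
    ultimately show "(y, p \<rho>) \<in> \<rho>" by (auto dest: symD)
  qed
  then show ?thesis using yS by blast
qed

end

definition co_basis :: "'a topology \<Rightarrow> ('a \<Rightarrow> 'a) set set" where
  "co_basis T = {{f. f ` K \<subseteq> U} | K U. compactin T K \<and> openin T U}"

lemma compact_open_eq: "compact_open T E = subtopology (topology_generated_by (co_basis T)) E"
  unfolding compact_open_def co_basis_def by simp

lemma UNIV_co_basis: "UNIV \<in> co_basis T"
proof -
  have "UNIV = {f. f ` {} \<subseteq> ({}::'a set)}" by simp
  moreover have "compactin T {}" "openin T {}" by auto
  ultimately show ?thesis unfolding co_basis_def by blast
qed

lemma topspace_compact_open: "topspace (compact_open T E) = E"
proof -
  have "\<Union>(co_basis T) = UNIV" using UNIV_co_basis by blast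
  then show ?thesis unfolding compact_open_eq by simp
qed

locale pfE = pf +
  fixes E :: "('a \<Rightarrow> 'a) set"
  assumes E_sub: "E \<subseteq> endo T m"
    and E_comp: "f \<in> E \<Longrightarrow> g \<in> E \<Longrightarrow> comp_op T f g \<in> E"
    and E_inv: "\<rho> \<in> FF \<Longrightarrow> g \<in> E \<Longrightarrow> (x,y) \<in> \<rho> \<Longrightarrow> (g x, g y) \<in> \<rho>"
begin

lemma E_cont: "f \<in> E \<Longrightarrow> continuous_map T T f"
  using E_sub unfolding endo_def by blast

lemma E_maps: "f \<in> E \<Longrightarrow> x \<in> S \<Longrightarrow> f x \<in> S"
proof -
  assume "f \<in> E" "x \<in> S"
  then show ?thesis using E_cont[of f] unfolding continuous_map_def by blast
qed

lemma E_ext: "f \<in> E \<Longrightarrow> f \<in> extensional S"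
  using E_sub unfolding endo_def by blast

lemma E_hom: "f \<in> E \<Longrightarrow> x \<in> S \<Longrightarrow> y \<in> S \<Longrightarrow> f (m x y) = m (f x) (f y)"
  using E_sub unfolding endo_def by blast

lemma rep_in: "\<rho> \<in> FF \<Longrightarrow> s \<in> S \<Longrightarrow> (s, SOME c. c \<in> \<rho>``{s}) \<in> \<rho>"
proof -
  assume r: "\<rho> \<in> FF" and s: "s \<in> S"
  have "s \<in> \<rho>``{s}" using equiv_class_self[OF F_equiv[OF r] s] .
  then have "(SOME c. c \<in> \<rho>``{s}) \<in> \<rho>``{s}" by (rule someI)
  then show ?thesis by simp
qed

lemma rmap_class: "\<rho> \<in> FF \<Longrightarrow> f \<in> E \<Longrightarrow> s \<in> S \<Longrightarrow> r_map T \<rho> f (\<rho>``{s}) = \<rho>``{f s}"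
proof -
  assume r: "\<rho> \<in> FF" and f: "f \<in> E" and s: "s \<in> S"
  have q: "\<rho>``{s} \<in> S//\<rho>" using s by (rule quotientI)
  have "(f s, f (SOME c. c \<in> \<rho>``{s})) \<in> \<rho>" using E_inv[OF r f rep_in[OF r s]] .
  then have "\<rho>``{f (SOME c. c \<in> \<rho>``{s})} = \<rho>``{f s}"
    using equiv_class_eq[OF F_equiv[OF r]] by metis
  then show ?thesis using q unfolding r_map_def by simp
qed

lemma rmap_eq_iff:
  assumes r: "\<rho> \<in> FF" and f: "f \<in> E" and g: "g \<in> E"
  shows "r_map T \<rho> f = r_map T \<rho> g \<longleftrightarrow> (\<forall>s\<in>S. (f s, g s) \<in> \<rho>)"
proof
  assume a: "r_map T \<rho> f = r_map T \<rho> g"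
  show "\<forall>s\<in>S. (f s, g s) \<in> \<rho>"
  proof
    fix s assume s: "s \<in> S"
    have "\<rho>``{f s} = \<rho>``{g s}" using a rmap_class[OF r f s] rmap_class[OF r g s] by simp
    then show "(f s, g s) \<in> \<rho>"
      using eq_equiv_class_iff[OF F_equiv[OF r] E_maps[OF f s] E_maps[OF g s]] by simp
  qed
next
  assume a: "\<forall>s\<in>S. (f s, g s) \<in> \<rho>"
  show "r_map T \<rho> f = r_map T \<rho> g"
  proof
    fix C
    show "r_map T \<rho> f C = r_map T \<rho> g C"
    proof (cases "C \<in> S//\<rho>")
      case True
      then obtain s where s: "s \<in> S" "C = \<rho>``{s}" by (auto elim: quotientE)
      have "\<rho>``{f s} = \<rho>``{g s}" using equiv_class_eq[OF F_equiv[OF r]] a s(1) by blast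
      then show ?thesis using rmap_class[OF r f s(1)] rmap_class[OF r g s(1)] s(2) by simp
    next
      case False
      then show ?thesis unfolding r_map_def by simp
    qed
  qed
qed

lemma hat_iff:
  assumes r: "\<rho> \<in> FF"
  shows "(f,g) \<in> hatrel T \<rho> E \<longleftrightarrow> f \<in> E \<and> g \<in> E \<and> (\<forall>s\<in>S. (f s, g s) \<in> \<rho>)"
  using rmap_eq_iff[OF r] unfolding hatrel_def by blast

lemma hat_equiv:
  assumes r: "\<rho> \<in> FF"
  shows "equiv E (hatrel T \<rho> E)"
proof (rule equivI)
  have e: "equiv S \<rho>" using F_equiv[OF r] .
  show "hatrel T \<rho> E \<subseteq> E \<times> E" unfolding hatrel_def by blast
  show "refl_on E (hatrel T \<rho> E)"
  proof (rule refl_onI)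
    fix f assume "f \<in> E" then show "(f,f) \<in> hatrel T \<rho> E" unfolding hatrel_def by simp
  qed
  show "sym (hatrel T \<rho> E)"
    by (rule symI) (auto simp: hatrel_def)
  show "trans (hatrel T \<rho> E)"
    by (rule transI) (auto simp: hatrel_def)
qed

lemma hat_class:
  assumes r: "\<rho> \<in> FF" and f: "f \<in> E"
  shows "hatrel T \<rho> E``{f} = {g \<in> E. \<forall>s\<in>S. (f s, g s) \<in> \<rho>}"
  using hat_iff[OF r] f by auto

lemma hat_mono:
  assumes "\<rho> \<in> FF" "\<rho>' \<in> FF" "\<rho> \<subseteq> \<rho>'"
  shows "hatrel T \<rho> E \<subseteq> hatrel T \<rho>' E"
proof
  fix p assume "p \<in> hatrel T \<rho> E"
  then obtain f g where p: "p = (f,g)" "(f,g) \<in> hatrel T \<rho> E" by (cases p) auto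
  then show "p \<in> hatrel T \<rho>' E" using hat_iff[OF assms(1)] hat_iff[OF assms(2)] assms(3) by blast
qed

lemma quot_finite:
  assumes r: "\<rho> \<in> FF"
  shows "finite (S//\<rho>)"
proof -
  have e: "equiv S \<rho>" using F_equiv[OF r] .
  have cS: "compactin T S" using cpt unfolding compact_space_def .
  have "\<And>V. V \<in> S//\<rho> \<Longrightarrow> openin T V"
    using oc_class_open[OF F_oc[OF r]] by (auto elim: quotientE)
  moreover have "S \<subseteq> \<Union>(S//\<rho>)" using Union_quotient[OF e] by simp
  ultimately obtain \<F> where F: "finite \<F>" "\<F> \<subseteq> S//\<rho>" "S \<subseteq> \<Union>\<F>"
    using compactin_cover[OF cS, of "S//\<rho>"] by blast
  have "S//\<rho> \<subseteq> \<F>"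
  proof
    fix C assume "C \<in> S//\<rho>"
    then obtain s where s: "s \<in> S" "C = \<rho>``{s}" by (auto elim: quotientE)
    then obtain D where D: "D \<in> \<F>" "s \<in> D" using F(3) by blast
    then obtain t where t: "t \<in> S" "D = \<rho>``{t}" using F(2) by (auto elim: quotientE)
    then have "(t,s) \<in> \<rho>" using D by simp
    then have "D = C" using equiv_class_eq[OF e] s t by simp
    then show "C \<in> \<F>" using D by simp
  qed
  then show ?thesis using F(1) finite_subset by blast
qed

lemma hat_class_open:
  assumes r: "\<rho> \<in> FF" and f: "f \<in> E"
  shows "openin (compact_open T E) (hatrel T \<rho> E``{f})"
proof -
  have e: "equiv S \<rho>" using F_equiv[OF r] .
  define rep where "rep C = (SOME c. c \<in> C)" for C :: "'a set"
  define G where "G = (\<lambda>C. {g. g ` C \<subseteq> \<rho>``{f (rep C)}}) ` (S//\<rho>)"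
  have G_sub: "insert UNIV G \<subseteq> co_basis T"
  proof
    fix X assume "X \<in> insert UNIV G"
    then consider "X = UNIV" | C where "C \<in> S//\<rho>" "X = {g. g ` C \<subseteq> \<rho>``{f (rep C)}}"
      unfolding G_def by blast
    then show "X \<in> co_basis T"
    proof cases
      case 1 then show ?thesis using UNIV_co_basis by simp
    next
      case 2
      then obtain s where s: "s \<in> S" "C = \<rho>``{s}" by (auto elim: quotientE)
      have "compactin T C" using closedin_compact_space[OF cpt oc_class_closed[OF F_oc[OF r] s(1)]] s(2) by simp
      moreover have "rep C \<in> C" unfolding rep_def using s equiv_class_self[OF e] by (metis someI)
      then have "f (rep C) \<in> S" using E_maps[OF f] s oc_sub[OF F_oc[OF r]] by blast
      then have "openin T (\<rho>``{f (rep C)})" using oc_class_open[OF F_oc[OF r]] by blast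
      ultimately have "\<exists>K U. {g. g ` C \<subseteq> \<rho>``{f (rep C)}} = {f. f ` K \<subseteq> U} \<and> compactin T K \<and> openin T U"
        by blast
      then show ?thesis unfolding co_basis_def 2(2) by simp
    qed
  qed
  have fin: "finite (insert UNIV G)" unfolding G_def using quot_finite[OF r] by simp
  have op: "openin (topology_generated_by (co_basis T)) (\<Inter>(insert UNIV G))"
    unfolding openin_topology_generated_by_iff
  proof (rule generate_topology_on_Inter[OF fin])
    fix K assume "K \<in> insert UNIV G"
    then have "K \<in> co_basis T" using G_sub by blast
    then show "generate_topology_on (co_basis T) K" by (rule generate_topology_on.Basis)
  next
    show "insert UNIV G \<noteq> {}" by simp
  qed
  have eq: "hatrel T \<rho> E``{f} = \<Inter>(insert UNIV G) \<inter> E"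
  proof
    show "hatrel T \<rho> E``{f} \<subseteq> \<Inter>(insert UNIV G) \<inter> E"
    proof
      fix g assume "g \<in> hatrel T \<rho> E``{f}"
      then have g: "g \<in> E" "\<forall>s\<in>S. (f s, g s) \<in> \<rho>" using hat_class[OF r f] by auto
      have "g \<in> X" if X: "X \<in> G" for X
      proof -
        obtain C where C: "C \<in> S//\<rho>" "X = {g. g ` C \<subseteq> \<rho>``{f (rep C)}}" using X unfolding G_def by blast
        then obtain s where s: "s \<in> S" "C = \<rho>``{s}" by (auto elim: quotientE)
        have "rep C \<in> C" unfolding rep_def using s equiv_class_self[OF e] by (metis someI)
        then have sc: "(s, rep C) \<in> \<rho>" using s by simp
        have "g ` C \<subseteq> \<rho>``{f (rep C)}"
        proof
          fix y assume "y \<in> g ` C"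
          then obtain x where x: "x \<in> C" "y = g x" by blast
          then have sx: "(s,x) \<in> \<rho>" using s by simp
          have xS: "x \<in> S" using sx oc_sub[OF F_oc[OF r]] by blast
          have "(rep C, x) \<in> \<rho>" using sc sx e unfolding equiv_def sym_def trans_def by blast
          then have "(f (rep C), f x) \<in> \<rho>" using E_inv[OF r f] by blast
          moreover have "(f x, g x) \<in> \<rho>" using g(2) xS by blast
          ultimately have "(f (rep C), g x) \<in> \<rho>" using e unfolding equiv_def trans_def by blast
          then show "y \<in> \<rho>``{f (rep C)}" using x by simp
        qed
        then show ?thesis using C by simp
      qed
      then show "g \<in> \<Inter>(insert UNIV G) \<inter> E" using g by blast
    qed
  next
    show "\<Inter>(insert UNIV G) \<inter> E \<subseteq> hatrel T \<rho> E``{f}"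
    proof
      fix g assume gI: "g \<in> \<Inter>(insert UNIV G) \<inter> E"
      have "\<forall>s\<in>S. (f s, g s) \<in> \<rho>"
      proof
        fix s assume s: "s \<in> S"
        define C where "C = \<rho>``{s}"
        have C: "C \<in> S//\<rho>" unfolding C_def using s by (rule quotientI)
        then have "{g. g ` C \<subseteq> \<rho>``{f (rep C)}} \<in> G" unfolding G_def by blast
        then have "g ` C \<subseteq> \<rho>``{f (rep C)}" using gI by blast
        moreover have sC: "s \<in> C" unfolding C_def using equiv_class_self[OF e s] .
        ultimately have a: "(f (rep C), g s) \<in> \<rho>" by blast
        have "rep C \<in> C" unfolding rep_def using sC by (metis someI)
        then have "(s, rep C) \<in> \<rho>" unfolding C_def by simp
        then have "(f s, f (rep C)) \<in> \<rho>" using E_inv[OF r f] by blast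
        then show "(f s, g s) \<in> \<rho>" using a e unfolding equiv_def trans_def by blast
      qed
      then show "g \<in> hatrel T \<rho> E``{f}" using hat_class[OF r f] gI by blast
    qed
  qed
  show ?thesis unfolding compact_open_eq openin_subtopology using op eq by blast
qed

end

lemma quot_istop:
  assumes e: "equiv (topspace X) R"
  shows "istopology (\<lambda>U. U \<subseteq> topspace X // R \<and> openin X (\<Union>U))"
  unfolding istopology_def
proof (rule conjI; intro allI impI)
  fix U V assume U: "U \<subseteq> topspace X // R \<and> openin X (\<Union>U)" and V: "V \<subseteq> topspace X // R \<and> openin X (\<Union>V)"
  have "\<Union>(U \<inter> V) = \<Union>U \<inter> \<Union>V"
  proof
    show "\<Union>(U \<inter> V) \<subseteq> \<Union>U \<inter> \<Union>V" by blast
    show "\<Union>U \<inter> \<Union>V \<subseteq> \<Union>(U \<inter> V)"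
    proof
      fix x assume "x \<in> \<Union>U \<inter> \<Union>V"
      then obtain A B where AB: "A \<in> U" "B \<in> V" "x \<in> A" "x \<in> B" by blast
      then have "A \<in> topspace X // R" "B \<in> topspace X // R" using U V by blast+
      then have "A = B \<or> A \<inter> B = {}" using quotient_disj[OF e] by blast
      then have "A = B" using AB by blast
      then show "x \<in> \<Union>(U \<inter> V)" using AB by blast
    qed
  qed
  moreover have "openin X (\<Union>U \<inter> \<Union>V)" using U V by (intro openin_Int) blast+
  ultimately show "U \<inter> V \<subseteq> topspace X // R \<and> openin X (\<Union>(U \<inter> V))" using U by simp blast
next
  fix K assume K: "\<forall>U\<in>K. U \<subseteq> topspace X // R \<and> openin X (\<Union>U)"
  have "\<Union>(\<Union>K) = \<Union>(Union ` K)" by blast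
  moreover have "openin X (\<Union>(Union ` K))"
  proof (rule openin_Union)
    fix S assume "S \<in> Union ` K"
    then obtain U where "U \<in> K" "S = \<Union>U" by blast
    then show "openin X S" using K by blast
  qed
  moreover have "\<Union>K \<subseteq> topspace X // R" using K by blast
  ultimately show "\<Union>K \<subseteq> topspace X // R \<and> openin X (\<Union>(\<Union>K))" by simp
qed

lemma openin_quot_top:
  assumes e: "equiv (topspace X) R"
  shows "openin (quot_top X R) U \<longleftrightarrow> U \<subseteq> topspace X // R \<and> openin X (\<Union>U)"
  unfolding quot_top_def using topology_inverse'[OF quot_istop[OF e]] by simp

lemma topspace_quot_top:
  assumes e: "equiv (topspace X) R"
  shows "topspace (quot_top X R) = topspace X // R"
proof -
  have "openin (quot_top X R) (topspace X // R)"
    using openin_quot_top[OF e] Union_quotient[OF e] by simp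
  then have "topspace X // R \<subseteq> topspace (quot_top X R)" by (rule openin_subset)
  moreover have "topspace (quot_top X R) \<subseteq> topspace X // R"
  proof
    fix C assume "C \<in> topspace (quot_top X R)"
    then obtain U where U: "openin (quot_top X R) U" "C \<in> U" unfolding topspace_def by blast
    then have "U \<subseteq> topspace X // R" unfolding openin_quot_top[OF e] by blast
    then show "C \<in> topspace X // R" using U(2) by blast
  qed
  ultimately show ?thesis by blast
qed

context pfE begin

lemma co_nbhd_gen:
  assumes "generate_topology_on (co_basis T) V"
  shows "\<forall>f\<in>E \<inter> V. \<exists>\<rho>\<in>FF. hatrel T \<rho> E``{f} \<subseteq> V"
  using assms
proof (induction rule: generate_topology_on.induct)
  case Empty
  then show ?case by simp
next
  case (Int a b)
  show ?case
  proof
    fix f assume f: "f \<in> E \<inter> (a \<inter> b)"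
    then obtain \<rho>a where ra: "\<rho>a \<in> FF" "hatrel T \<rho>a E``{f} \<subseteq> a" using Int.IH(1) by blast
    obtain \<rho>b where rb: "\<rho>b \<in> FF" "hatrel T \<rho>b E``{f} \<subseteq> b" using Int.IH(2) f by blast
    have "finite {\<rho>a, \<rho>b}" "{\<rho>a, \<rho>b} \<subseteq> FF" using ra rb by auto
    then obtain \<rho> where r: "\<rho> \<in> FF" "\<forall>\<alpha>\<in>{\<rho>a, \<rho>b}. \<rho> \<subseteq> \<alpha>" using F_lower_finite[of "{\<rho>a, \<rho>b}"] by blast
    have "hatrel T \<rho> E \<subseteq> hatrel T \<rho>a E" using hat_mono[OF r(1) ra(1)] r(2) by blast
    moreover have "hatrel T \<rho> E \<subseteq> hatrel T \<rho>b E" using hat_mono[OF r(1) rb(1)] r(2) by blast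
    ultimately have "hatrel T \<rho> E``{f} \<subseteq> a \<inter> b" using ra(2) rb(2) by blast
    then show "\<exists>\<rho>\<in>FF. hatrel T \<rho> E``{f} \<subseteq> a \<inter> b" using r(1) by blast
  qed
next
  case (UN K)
  show ?case
  proof
    fix f assume f: "f \<in> E \<inter> \<Union>K"
    then obtain k where k: "k \<in> K" "f \<in> k" by blast
    then obtain \<rho> where "\<rho> \<in> FF" "hatrel T \<rho> E``{f} \<subseteq> k" using UN.IH f by blast
    then show "\<exists>\<rho>\<in>FF. hatrel T \<rho> E``{f} \<subseteq> \<Union>K" using k by blast
  qed
next
  case (Basis s)
  then obtain K U where s: "s = {g. g ` K \<subseteq> U}" "compactin T K" "openin T U"
    unfolding co_basis_def by blast
  show ?case
  proof
    fix f assume f: "f \<in> E \<inter> s"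
    then have fKU: "f ` K \<subseteq> U" using s by blast
    have cfK: "compactin T (f ` K)" using image_compactin[OF s(2) E_cont] f by blast
    obtain \<rho> where r: "\<rho> \<in> FF" "\<rho>``(f ` K) \<subseteq> U" using F_nbhd_cpt[OF cfK s(3) fKU] by blast
    have KS: "K \<subseteq> S" using s(2) compactin_subset_topspace by blast
    have "hatrel T \<rho> E``{f} \<subseteq> s"
    proof
      fix g assume "g \<in> hatrel T \<rho> E``{f}"
      then have g: "\<forall>x\<in>S. (f x, g x) \<in> \<rho>" using hat_class[OF r(1)] f by blast
      have "g ` K \<subseteq> U"
      proof
        fix y assume "y \<in> g ` K"
        then obtain k where k: "k \<in> K" "y = g k" by blast
        then have "(f k, g k) \<in> \<rho>" using g KS by blast
        then have "g k \<in> \<rho>``(f ` K)" using k(1) by blast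
        then show "y \<in> U" using r(2) k(2) by blast
      qed
      then show "g \<in> s" using s(1) by blast
    qed
    then show "\<exists>\<rho>\<in>FF. hatrel T \<rho> E``{f} \<subseteq> s" using r(1) by blast
  qed
qed

lemma co_nbhd:
  assumes W: "openin (compact_open T E) W" and f: "f \<in> W"
  shows "\<exists>\<rho>\<in>FF. hatrel T \<rho> E``{f} \<subseteq> W"
proof -
  obtain V where V: "openin (topology_generated_by (co_basis T)) V" "W = V \<inter> E"
    using W unfolding compact_open_eq openin_subtopology by blast
  have "generate_topology_on (co_basis T) V" using V(1) openin_topology_generated_by by blast
  then have "\<forall>f\<in>E \<inter> V. \<exists>\<rho>\<in>FF. hatrel T \<rho> E``{f} \<subseteq> V" by (rule co_nbhd_gen)
  then obtain \<rho> where r: "\<rho> \<in> FF" "hatrel T \<rho> E``{f} \<subseteq> V" using f V(2) by blast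
  have "hatrel T \<rho> E``{f} \<subseteq> E" unfolding hatrel_def by blast
  then show ?thesis using r V(2) by blast
qed

lemma cont_const:
  assumes r: "\<rho> \<in> FF" and into: "\<And>f. f \<in> E \<Longrightarrow> \<phi> f \<in> topspace Y"
    and const: "\<And>f g. (f,g) \<in> hatrel T \<rho> E \<Longrightarrow> \<phi> f = \<phi> g"
  shows "continuous_map (compact_open T E) Y \<phi>"
  unfolding continuous_map_def topspace_compact_open
proof (intro conjI allI impI)
  show "\<phi> \<in> E \<rightarrow> topspace Y" using into by blast
  fix U assume "openin Y U"
  show "openin (compact_open T E) {x \<in> E. \<phi> x \<in> U}"
  proof (subst openin_subopen, intro ballI)
    fix f assume f: "f \<in> {x \<in> E. \<phi> x \<in> U}"
    have "hatrel T \<rho> E``{f} \<subseteq> {x \<in> E. \<phi> x \<in> U}"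
    proof
      fix g assume "g \<in> hatrel T \<rho> E``{f}"
      then have "(f,g) \<in> hatrel T \<rho> E" by simp
      then show "g \<in> {x \<in> E. \<phi> x \<in> U}" using const[of f g] f unfolding hatrel_def by auto
    qed
    moreover have "f \<in> hatrel T \<rho> E``{f}" using equiv_class_self[OF hat_equiv[OF r]] f by blast
    ultimately show "\<exists>T'. openin (compact_open T E) T' \<and> f \<in> T' \<and> T' \<subseteq> {x \<in> E. \<phi> x \<in> U}"
      using hat_class_open[OF r] f by blast
  qed
qed

lemma comp_pt: "x \<in> S \<Longrightarrow> comp_op T f g x = f (g x)"
  unfolding comp_op_def compose_def by simp

lemma hat_oc:
  assumes r: "\<rho> \<in> FF"
  shows "open_congruence (compact_open T E) (comp_op T) (hatrel T \<rho> E)"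
  unfolding open_congruence_def congruence_def topspace_compact_open
proof (intro conjI)
  show e: "equiv E (hatrel T \<rho> E)" by (rule hat_equiv[OF r])
  show "\<forall>(x, y)\<in>hatrel T \<rho> E. \<forall>z\<in>E. (comp_op T z x, comp_op T z y) \<in> hatrel T \<rho> E \<and>
          (comp_op T x z, comp_op T y z) \<in> hatrel T \<rho> E"
  proof (intro ballI, clarify)
    fix f g h assume fg: "(f,g) \<in> hatrel T \<rho> E" and h: "h \<in> E"
    then have f: "f \<in> E" and g: "g \<in> E" and pw: "\<forall>s\<in>S. (f s, g s) \<in> \<rho>" unfolding hat_iff[OF r] by blast+
    have "\<forall>s\<in>S. (comp_op T h f s, comp_op T h g s) \<in> \<rho>"
      using pw E_inv[OF r h] comp_pt by simp
    then have 1: "(comp_op T h f, comp_op T h g) \<in> hatrel T \<rho> E"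
      unfolding hat_iff[OF r] using E_comp h f g by blast
    have "\<forall>s\<in>S. (comp_op T f h s, comp_op T g h s) \<in> \<rho>"
      using pw E_maps[OF h] comp_pt by simp
    then have 2: "(comp_op T f h, comp_op T g h) \<in> hatrel T \<rho> E"
      unfolding hat_iff[OF r] using E_comp h f g by blast
    show "(comp_op T h f, comp_op T h g) \<in> hatrel T \<rho> E \<and> (comp_op T f h, comp_op T g h) \<in> hatrel T \<rho> E"
      using 1 2 by blast
  qed
  have "hatrel T \<rho> E = (\<Union>f\<in>E. hatrel T \<rho> E``{f} \<times> hatrel T \<rho> E``{f})"
  proof
    show "hatrel T \<rho> E \<subseteq> (\<Union>f\<in>E. hatrel T \<rho> E``{f} \<times> hatrel T \<rho> E``{f})"
    proof
      fix p assume p: "p \<in> hatrel T \<rho> E"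
      then obtain f g where fg: "p = (f,g)" by (cases p)
      then have "f \<in> E" using p unfolding hatrel_def by blast
      moreover have "f \<in> hatrel T \<rho> E``{f}" using equiv_class_self[OF e] calculation by blast
      ultimately show "p \<in> (\<Union>f\<in>E. hatrel T \<rho> E``{f} \<times> hatrel T \<rho> E``{f})" using p fg by blast
    qed
    show "(\<Union>f\<in>E. hatrel T \<rho> E``{f} \<times> hatrel T \<rho> E``{f}) \<subseteq> hatrel T \<rho> E"
    proof clarify
      fix f g h assume "f \<in> E" "(f,g) \<in> hatrel T \<rho> E" "(f,h) \<in> hatrel T \<rho> E"
      then show "(g,h) \<in> hatrel T \<rho> E" using e unfolding equiv_def sym_def trans_def by blast
    qed
  qed
  moreover have "openin (prod_topology (compact_open T E) (compact_open T E))
      (\<Union>f\<in>E. hatrel T \<rho> E``{f} \<times> hatrel T \<rho> E``{f})"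
  proof (intro openin_Union ballI)
    fix X assume "X \<in> (\<lambda>f. hatrel T \<rho> E``{f} \<times> hatrel T \<rho> E``{f}) ` E"
    then obtain f where "f \<in> E" "X = hatrel T \<rho> E``{f} \<times> hatrel T \<rho> E``{f}" by blast
    then show "openin (prod_topology (compact_open T E) (compact_open T E)) X"
      using hat_class_open[OF r, of f] by (simp add: openin_prod_Times_iff)
  qed
  ultimately show "openin (prod_topology (compact_open T E) (compact_open T E)) (hatrel T \<rho> E)"
    by simp
qed

end

context pfE begin

abbreviation "HH \<equiv> (\<lambda>\<rho>. hatrel T \<rho> E) ` FF"
abbreviation "CC \<equiv> compact_open T E"

lemma H_equiv: "R \<in> HH \<Longrightarrow> equiv E R"
proof -
  assume "R \<in> HH"
  then obtain \<rho> where "\<rho> \<in> FF" "R = hatrel T \<rho> E" by blast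
  then show ?thesis using hat_equiv by simp
qed

lemma canon_at: "R \<in> HH \<Longrightarrow> canon HH f R = R``{f}"
  unfolding canon_def by simp

lemma canon_projlim: "f \<in> E \<Longrightarrow> canon HH f \<in> projlim E HH"
  unfolding projlim_def
proof (intro CollectI conjI ballI impI)
  assume f: "f \<in> E"
  show "canon HH f \<in> (\<Pi>\<^sub>E R\<in>HH. E // R)"
    unfolding canon_def using f by (auto intro: quotientI)
  fix R1 R2 assume R: "R1 \<in> HH" "R2 \<in> HH" "R1 \<subseteq> R2"
  have e1: "equiv E R1" and e2: "equiv E R2" using H_equiv R by blast+
  have "R2 `` (R1``{f}) = R2``{f}"
  proof
    show "R2 `` (R1``{f}) \<subseteq> R2``{f}"
      using R(3) e2 unfolding equiv_def trans_def by blast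
    show "R2``{f} \<subseteq> R2 `` (R1``{f})"
      using equiv_class_self[OF e1 f] by blast
  qed
  then show "R2 `` canon HH f R1 = canon HH f R2" using canon_at R by simp
qed

lemma canon_inj: "inj_on (canon HH) E"
proof (rule inj_onI)
  fix f g assume f: "f \<in> E" and g: "g \<in> E" and eq: "canon HH f = canon HH g"
  show "f = g"
  proof
    fix s
    show "f s = g s"
    proof (cases "s \<in> S")
      case False
      then show ?thesis using E_ext[OF f] E_ext[OF g] by (simp add: extensional_def)
    next
      case True
      have all: "\<And>\<rho>. \<rho> \<in> FF \<Longrightarrow> (f s, g s) \<in> \<rho>"
      proof -
        fix \<rho> assume r: "\<rho> \<in> FF"
        then have R: "hatrel T \<rho> E \<in> HH" by blast
        have "hatrel T \<rho> E``{f} = hatrel T \<rho> E``{g}" using fun_cong[OF eq, of "hatrel T \<rho> E"] canon_at[OF R] by simp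
        then have "(f,g) \<in> hatrel T \<rho> E"
          using eq_equiv_class_iff[OF hat_equiv[OF r] f g] by simp
        then show "(f s, g s) \<in> \<rho>" using hat_iff[OF r] True by blast
      qed
      show ?thesis using F_sep[OF E_maps[OF f True] E_maps[OF g True] all] .
    qed
  qed
qed

lemma top_projlim: "topspace (projlim_top CC HH) = projlim E HH"
proof -
  have "topspace (product_topology (\<lambda>R. quot_top CC R) HH) = (\<Pi>\<^sub>E R\<in>HH. E // R)"
  proof -
    have *: "\<And>R. R \<in> HH \<Longrightarrow> topspace (quot_top CC R) = E // R"
    proof -
      fix R assume R: "R \<in> HH"
      have e: "equiv (topspace CC) R" using H_equiv[OF R] by (simp only: topspace_compact_open)
      show "topspace (quot_top CC R) = E // R" using topspace_quot_top[OF e] by (simp only: topspace_compact_open)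
    qed
    show ?thesis unfolding topspace_product_topology by (rule PiE_cong) (rule *)
  qed
  moreover have "projlim E HH \<subseteq> (\<Pi>\<^sub>E R\<in>HH. E // R)" unfolding projlim_def by blast
  moreover have pe: "projlim (topspace CC) HH = projlim E HH" by (simp only: topspace_compact_open)
  ultimately show ?thesis unfolding projlim_top_def topspace_subtopology pe by blast
qed

lemma canon_cont: "continuous_map CC (projlim_top CC HH) (canon HH)"
  unfolding projlim_top_def topspace_compact_open
proof (rule continuous_map_into_subtopology)
  show "canon HH \<in> topspace CC \<rightarrow> projlim E HH"
    using canon_projlim topspace_compact_open by blast
  show "continuous_map CC (product_topology (quot_top CC) HH) (canon HH)"
    unfolding continuous_map_componentwise
  proof (intro conjI ballI)
    show "canon HH ` topspace CC \<subseteq> extensional HH" unfolding canon_def by auto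
    fix R assume R: "R \<in> HH"
    then obtain \<rho> where r: "\<rho> \<in> FF" "R = hatrel T \<rho> E" by blast
    have e: "equiv E R" using H_equiv R by blast
    show "continuous_map CC (quot_top CC R) (\<lambda>x. canon HH x R)"
    proof (rule cont_const[OF r(1)])
      fix f assume "f \<in> E"
      then have "R``{f} \<in> E // R" by (rule quotientI)
      moreover have e': "equiv (topspace CC) R" using e by (simp only: topspace_compact_open)
      ultimately show "canon HH f R \<in> topspace (quot_top CC R)"
        using canon_at[OF R] topspace_quot_top[OF e'] by (simp only: topspace_compact_open)
    next
      fix f g assume "(f,g) \<in> hatrel T \<rho> E"
      then have "(f,g) \<in> R" using r(2) by simp
      then show "canon HH f R = canon HH g R"
        using canon_at[OF R] equiv_class_eq[OF e] by simp
    qed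
  qed
qed

lemma canon_open:
  assumes surj: "projlim E HH \<subseteq> canon HH ` E"
  shows "open_map CC (projlim_top CC HH) (canon HH)"
  unfolding open_map_def
proof (intro allI impI)
  fix U assume U: "openin CC U"
  have UE: "U \<subseteq> E" using openin_subset[OF U] topspace_compact_open by metis
  have "\<forall>f\<in>U. \<exists>\<rho>. \<rho> \<in> FF \<and> hatrel T \<rho> E``{f} \<subseteq> U" using co_nbhd[OF U] by blast
  then obtain rf where rf: "\<And>f. f \<in> U \<Longrightarrow> rf f \<in> FF \<and> hatrel T (rf f) E``{f} \<subseteq> U"
    using bchoice[of U "\<lambda>f \<rho>. \<rho> \<in> FF \<and> hatrel T \<rho> E``{f} \<subseteq> U"] by blast
  define P where "P = product_topology (quot_top CC) HH"
  define Cyl where "Cyl f = {x \<in> topspace P. x (hatrel T (rf f) E) \<in> {hatrel T (rf f) E``{f}}}" for f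
  have cyl_open: "openin P (Cyl f)" if f: "f \<in> U" for f
  proof -
    let ?R = "hatrel T (rf f) E"
    have R: "?R \<in> HH" using rf f by blast
    have e: "equiv (topspace CC) ?R" using H_equiv[OF R] topspace_compact_open by metis
    have fE: "f \<in> E" using f UE by blast
    have "openin (quot_top CC ?R) {?R``{f}}"
      unfolding openin_quot_top[OF e] topspace_compact_open
      using hat_class_open[of "rf f" f] rf[OF f] fE by (auto intro: quotientI)
    then show ?thesis unfolding Cyl_def P_def
      by (rule openin_continuous_map_preimage[OF continuous_map_product_projection[OF R]])
  qed
  have pe: "projlim (topspace CC) HH = projlim E HH" by (simp only: topspace_compact_open)
  have eq: "canon HH ` U = (\<Union>f\<in>U. Cyl f) \<inter> projlim (topspace CC) HH"
  proof
    show "canon HH ` U \<subseteq> (\<Union>f\<in>U. Cyl f) \<inter> projlim (topspace CC) HH"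
    proof
      fix x assume "x \<in> canon HH ` U"
      then obtain g where g: "g \<in> U" "x = canon HH g" by blast
      have gE: "g \<in> E" using g UE by blast
      have R: "hatrel T (rf g) E \<in> HH" using rf g by blast
      have xp: "x \<in> projlim E HH" using canon_projlim gE g by simp
      moreover have "topspace P \<inter> projlim (topspace CC) HH = projlim E HH"
        using top_projlim unfolding P_def projlim_top_def topspace_subtopology .
      ultimately have "x \<in> topspace P" by blast
      moreover have "x (hatrel T (rf g) E) = hatrel T (rf g) E``{g}" using canon_at[OF R] g by simp
      ultimately have "x \<in> Cyl g" unfolding Cyl_def by simp
      then show "x \<in> (\<Union>f\<in>U. Cyl f) \<inter> projlim (topspace CC) HH"
        using g xp pe by blast
    qed
  next
    show "(\<Union>f\<in>U. Cyl f) \<inter> projlim (topspace CC) HH \<subseteq> canon HH ` U"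
    proof
      fix x assume x: "x \<in> (\<Union>f\<in>U. Cyl f) \<inter> projlim (topspace CC) HH"
      then obtain f where f: "f \<in> U" "x \<in> Cyl f" by blast
      have xp: "x \<in> projlim E HH" using x pe by blast
      then obtain g where g: "g \<in> E" "x = canon HH g" using surj by blast
      let ?R = "hatrel T (rf f) E"
      have R: "?R \<in> HH" using rf f by blast
      have "?R``{g} = ?R``{f}" using f(2) g canon_at[OF R] unfolding Cyl_def by simp
      then have "(f,g) \<in> ?R" using eq_equiv_class_iff[OF H_equiv[OF R]] g(1) f(1) UE by blast
      then have "g \<in> U" using rf[OF f(1)] by blast
      then show "x \<in> canon HH ` U" using g by blast
    qed
  qed
  have "openin P (\<Union>f\<in>U. Cyl f)" using cyl_open by blast
  then show "openin (projlim_top CC HH) (canon HH ` U)"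
    unfolding projlim_top_def openin_subtopology P_def[symmetric] using eq by blast
qed

lemma canon_mult:
  assumes f: "f \<in> E" and g: "g \<in> E"
  shows "canon HH (comp_op T f g) = (\<lambda>R\<in>HH. qmult R (comp_op T) (canon HH f R) (canon HH g R))"
proof
  fix R
  show "canon HH (comp_op T f g) R = (\<lambda>R\<in>HH. qmult R (comp_op T) (canon HH f R) (canon HH g R)) R"
  proof (cases "R \<in> HH")
    case False
    then show ?thesis unfolding canon_def by simp
  next
    case R: True
    then obtain \<rho> where r: "\<rho> \<in> FF" "R = hatrel T \<rho> E" by blast
    have e: "equiv E R" using H_equiv R by blast
    have oc: "congruence E (comp_op T) R"
      using hat_oc[OF r(1)] r(2) unfolding open_congruence_def topspace_compact_open by simp
    define a where "a = (SOME a. a \<in> R``{f})"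
    define b where "b = (SOME b. b \<in> R``{g})"
    have "a \<in> R``{f}" unfolding a_def using equiv_class_self[OF e f] by (metis someI)
    then have fa: "(f,a) \<in> R" by simp
    have "b \<in> R``{g}" unfolding b_def using equiv_class_self[OF e g] by (metis someI)
    then have gb: "(g,b) \<in> R" by simp
    have aE: "a \<in> E" using fa e unfolding equiv_def by blast
    have 1: "(comp_op T f g, comp_op T a g) \<in> R" using oc fa g unfolding congruence_def by blast
    have 2: "(comp_op T a g, comp_op T a b) \<in> R" using oc gb aE unfolding congruence_def by blast
    have "(comp_op T f g, comp_op T a b) \<in> R" using 1 2 e unfolding equiv_def trans_def by blast
    then have "R``{comp_op T f g} = R``{comp_op T a b}" using equiv_class_eq[OF e] by blast
    then show ?thesis using R canon_at[OF R] unfolding qmult_def a_def b_def by simp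
  qed
qed

theorem generic:
  assumes rE: "\<And>\<rho> f. \<rho> \<in> FF \<Longrightarrow> f \<in> E \<Longrightarrow> r_map T \<rho> f \<in> Eq \<rho>"
    and surj: "projlim E HH \<subseteq> canon HH ` E"
  shows "projlim_conclusion T FF E Eq"
proof -
  have A: "\<forall>\<rho>\<in>FF. continuous_map (compact_open T E) (compact_open (quot_top T \<rho>) (Eq \<rho>)) (r_map T \<rho>)
       \<and> open_congruence (compact_open T E) (comp_op T) (hatrel T \<rho> E)"
  proof (intro ballI conjI)
    fix \<rho> assume r: "\<rho> \<in> FF"
    show "continuous_map (compact_open T E) (compact_open (quot_top T \<rho>) (Eq \<rho>)) (r_map T \<rho>)"
    proof (rule cont_const[OF r])
      fix f assume "f \<in> E"
      then show "r_map T \<rho> f \<in> topspace (compact_open (quot_top T \<rho>) (Eq \<rho>))"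
        using rE[OF r] topspace_compact_open by metis
    next
      fix f g assume "(f,g) \<in> hatrel T \<rho> E"
      then show "r_map T \<rho> f = r_map T \<rho> g" unfolding hatrel_def by simp
    qed
    show "open_congruence (compact_open T E) (comp_op T) (hatrel T \<rho> E)" by (rule hat_oc[OF r])
  qed
  have img: "canon HH ` E = projlim E HH" using canon_projlim surj by blast
  have B1: "bij_betw (canon HH) E (projlim E HH)" unfolding bij_betw_def using canon_inj img by blast
  have B2: "homeomorphic_map CC (projlim_top CC HH) (canon HH)"
  proof (rule bijective_open_imp_homeomorphic_map[OF canon_cont canon_open[OF surj]])
    show "canon HH ` topspace CC = topspace (projlim_top CC HH)"
      using img top_projlim topspace_compact_open by metis
    show "inj_on (canon HH) (topspace CC)" using canon_inj topspace_compact_open by metis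
  qed
  have B3: "\<forall>f\<in>E. \<forall>g\<in>E. canon HH (comp_op T f g) = (\<lambda>R\<in>HH. qmult R (comp_op T) (canon HH f R) (canon HH g R))"
    using canon_mult by blast
  have B4: "canon HH (restrict id S) = (\<lambda>R\<in>HH. R `` {restrict id S})"
    unfolding canon_def by simp
  show ?thesis unfolding projlim_conclusion_def Let_def
    by (rule conjI[OF A conjI[OF B1 conjI[OF B2 conjI[OF B3 B4]]]])
qed

end

context pf begin

lemma qmult_class:
  assumes r: "\<rho> \<in> FF" and x: "x \<in> S" and y: "y \<in> S"
  shows "qmult \<rho> m (\<rho>``{x}) (\<rho>``{y}) = \<rho>``{m x y}"
proof -
  have e: "equiv S \<rho>" using F_equiv[OF r] .
  have oc: "open_congruence T m \<rho>" using F_oc[OF r] .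
  define a where "a = (SOME a. a \<in> \<rho>``{x})"
  define b where "b = (SOME b. b \<in> \<rho>``{y})"
  have "a \<in> \<rho>``{x}" unfolding a_def using equiv_class_self[OF e x] by (metis someI)
  then have xa: "(x,a) \<in> \<rho>" by simp
  have "b \<in> \<rho>``{y}" unfolding b_def using equiv_class_self[OF e y] by (metis someI)
  then have yb: "(y,b) \<in> \<rho>" by simp
  have aS: "a \<in> S" using xa oc_sub[OF oc] by blast
  have 1: "(m x y, m a y) \<in> \<rho>" using oc_comp[OF oc xa y] by blast
  have 2: "(m a y, m a b) \<in> \<rho>" using oc_comp[OF oc yb aS] by blast
  have "(m x y, m a b) \<in> \<rho>" using 1 2 e unfolding equiv_def trans_def by blast
  then have "\<rho>``{m a b} = \<rho>``{m x y}" using equiv_class_eq[OF e] by metis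
  then show ?thesis unfolding qmult_def a_def b_def by simp
qed

end

context pfE begin

lemma rmap_endo:
  assumes r: "\<rho> \<in> FF" and f: "f \<in> E"
  shows "r_map T \<rho> f \<in> endo (quot_top T \<rho>) (qmult \<rho> m)"
proof -
  have e: "equiv S \<rho>" using F_equiv[OF r] .
  have tQ: "topspace (quot_top T \<rho>) = S//\<rho>" using topspace_quot_top[OF e] .
  have maps: "r_map T \<rho> f C \<in> S//\<rho>" if C: "C \<in> S//\<rho>" for C
  proof -
    obtain s where s: "s \<in> S" "C = \<rho>``{s}" using C by (auto elim: quotientE)
    show ?thesis using rmap_class[OF r f s(1)] s(2) E_maps[OF f s(1)] by (simp add: quotientI)
  qed
  have cont: "continuous_map (quot_top T \<rho>) (quot_top T \<rho>) (r_map T \<rho> f)"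
    unfolding continuous_map_def tQ
  proof (intro conjI allI impI)
    show "r_map T \<rho> f \<in> S // \<rho> \<rightarrow> S // \<rho>" using maps by blast
    fix U assume U: "openin (quot_top T \<rho>) U"
    then have U1: "U \<subseteq> S//\<rho>" and U2: "openin T (\<Union>U)" using openin_quot_top[OF e] by blast+
    have eq: "\<Union>{C \<in> S//\<rho>. r_map T \<rho> f C \<in> U} = {s \<in> S. f s \<in> \<Union>U}"
    proof
      show "\<Union>{C \<in> S//\<rho>. r_map T \<rho> f C \<in> U} \<subseteq> {s \<in> S. f s \<in> \<Union>U}"
      proof
        fix s assume "s \<in> \<Union>{C \<in> S//\<rho>. r_map T \<rho> f C \<in> U}"
        then obtain C where C: "C \<in> S//\<rho>" "r_map T \<rho> f C \<in> U" "s \<in> C" by blast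
        obtain t where t: "t \<in> S" "C = \<rho>``{t}" using C(1) by (auto elim: quotientE)
        have ts: "(t,s) \<in> \<rho>" using C(3) t(2) by simp
        then have sS: "s \<in> S" using oc_sub[OF F_oc[OF r]] by blast
        have "(f t, f s) \<in> \<rho>" using E_inv[OF r f ts] .
        then have "f s \<in> \<rho>``{f t}" by simp
        moreover have "\<rho>``{f t} \<in> U" using C(2) t rmap_class[OF r f t(1)] by simp
        ultimately show "s \<in> {s \<in> S. f s \<in> \<Union>U}" using sS by blast
      qed
      show "{s \<in> S. f s \<in> \<Union>U} \<subseteq> \<Union>{C \<in> S//\<rho>. r_map T \<rho> f C \<in> U}"
      proof
        fix s assume s: "s \<in> {s \<in> S. f s \<in> \<Union>U}"
        then obtain D where D: "D \<in> U" "f s \<in> D" by blast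
        obtain d where d: "d \<in> S" "D = \<rho>``{d}" using D(1) U1 by (auto elim: quotientE)
        have "(d, f s) \<in> \<rho>" using D(2) d(2) by simp
        then have "\<rho>``{f s} = D" using equiv_class_eq[OF e] d(2) by metis
        then have "r_map T \<rho> f (\<rho>``{s}) \<in> U" using rmap_class[OF r f] s D(1) by simp
        moreover have "s \<in> \<rho>``{s}" using equiv_class_self[OF e] s by blast
        moreover have "\<rho>``{s} \<in> S//\<rho>" using s by (simp add: quotientI)
        ultimately show "s \<in> \<Union>{C \<in> S//\<rho>. r_map T \<rho> f C \<in> U}" by blast
      qed
    qed
    have "openin T {s \<in> S. f s \<in> \<Union>U}" using openin_continuous_map_preimage[OF E_cont[OF f] U2] .
    then show "openin (quot_top T \<rho>) {x \<in> S // \<rho>. r_map T \<rho> f x \<in> U}"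
      unfolding openin_quot_top[OF e] using eq by simp
  qed
  have ext: "r_map T \<rho> f \<in> extensional (topspace (quot_top T \<rho>))"
    unfolding tQ r_map_def by simp
  have hom: "\<forall>A\<in>topspace (quot_top T \<rho>). \<forall>B\<in>topspace (quot_top T \<rho>).
     r_map T \<rho> f (qmult \<rho> m A B) = qmult \<rho> m (r_map T \<rho> f A) (r_map T \<rho> f B)"
    unfolding tQ
  proof (intro ballI)
    fix A B assume A: "A \<in> S//\<rho>" and B: "B \<in> S//\<rho>"
    obtain a where a: "a \<in> S" "A = \<rho>``{a}" using A by (auto elim: quotientE)
    obtain b where b: "b \<in> S" "B = \<rho>``{b}" using B by (auto elim: quotientE)
    have "r_map T \<rho> f (qmult \<rho> m A B) = \<rho>``{f (m a b)}"
      using qmult_class[OF r a(1) b(1)] rmap_class[OF r f mult_in[OF a(1) b(1)]] a b by simp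
    also have "\<dots> = \<rho>``{m (f a) (f b)}" using E_hom[OF f a(1) b(1)] by simp
    also have "\<dots> = qmult \<rho> m (\<rho>``{f a}) (\<rho>``{f b})"
      using qmult_class[OF r E_maps[OF f a(1)] E_maps[OF f b(1)]] by simp
    also have "\<dots> = qmult \<rho> m (r_map T \<rho> f A) (r_map T \<rho> f B)"
      using rmap_class[OF r f a(1)] rmap_class[OF r f b(1)] a b by simp
    finally show "r_map T \<rho> f (qmult \<rho> m A B) = qmult \<rho> m (r_map T \<rho> f A) (r_map T \<rho> f B)" .
  qed
  show ?thesis unfolding endo_def using cont ext hom by blast
qed

lemma sel:
  assumes x: "x \<in> projlim E HH"
  shows "\<exists>gs. (\<forall>\<rho>\<in>FF. gs \<rho> \<in> E \<and> x (hatrel T \<rho> E) = hatrel T \<rho> E``{gs \<rho>}) \<and>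
     (\<forall>\<rho>1\<in>FF. \<forall>\<rho>3\<in>FF. \<rho>3 \<subseteq> \<rho>1 \<longrightarrow> (\<forall>s\<in>S. (gs \<rho>3 s, gs \<rho>1 s) \<in> \<rho>1))"
proof -
  have xP: "x \<in> (\<Pi>\<^sub>E R\<in>HH. E // R)" using x unfolding projlim_def mem_Collect_eq by (rule conjunct1)
  have "\<forall>\<rho>\<in>FF. \<exists>g. g \<in> E \<and> x (hatrel T \<rho> E) = hatrel T \<rho> E``{g}"
  proof
    fix \<rho> assume r: "\<rho> \<in> FF"
    then have "x (hatrel T \<rho> E) \<in> E // hatrel T \<rho> E" using xP by blast
    then show "\<exists>g. g \<in> E \<and> x (hatrel T \<rho> E) = hatrel T \<rho> E``{g}" by (auto elim: quotientE)
  qed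
  then obtain gs where gs: "\<And>\<rho>. \<rho> \<in> FF \<Longrightarrow> gs \<rho> \<in> E \<and> x (hatrel T \<rho> E) = hatrel T \<rho> E``{gs \<rho>}"
    using bchoice[of FF "\<lambda>\<rho> g. g \<in> E \<and> x (hatrel T \<rho> E) = hatrel T \<rho> E``{g}"] by blast
  have "\<forall>\<rho>1\<in>FF. \<forall>\<rho>3\<in>FF. \<rho>3 \<subseteq> \<rho>1 \<longrightarrow> (\<forall>s\<in>S. (gs \<rho>3 s, gs \<rho>1 s) \<in> \<rho>1)"
  proof (intro ballI impI)
    fix \<rho>1 \<rho>3 s assume r1: "\<rho>1 \<in> FF" and r3: "\<rho>3 \<in> FF" and sub: "\<rho>3 \<subseteq> \<rho>1" and s: "s \<in> S"
    let ?R1 = "hatrel T \<rho>1 E" and ?R3 = "hatrel T \<rho>3 E"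
    have RR: "?R3 \<subseteq> ?R1" using hat_mono[OF r3 r1 sub] .
    have R1: "?R1 \<in> HH" using r1 by (rule imageI)
    have R3: "?R3 \<in> HH" using r3 by (rule imageI)
    have "\<forall>R1\<in>HH. \<forall>R2\<in>HH. R1 \<subseteq> R2 \<longrightarrow> R2 `` (x R1) = x R2"
      using x unfolding projlim_def mem_Collect_eq by (rule conjunct2)
    note all = this
    have "?R3 \<subseteq> ?R1 \<longrightarrow> ?R1 `` (x ?R3) = x ?R1" using bspec[OF bspec[OF all R3] R1] .
    then have "?R1 `` (x ?R3) = x ?R1" using RR by (rule mp)
    then have eq: "?R1 `` (?R3``{gs \<rho>3}) = ?R1``{gs \<rho>1}" using gs[OF r1] gs[OF r3] by simp
    have "gs \<rho>3 \<in> ?R3``{gs \<rho>3}" using equiv_class_self[OF hat_equiv[OF r3]] gs[OF r3] by blast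
    then have "(gs \<rho>3, gs \<rho>3) \<in> ?R1" using RR by auto
    then have "gs \<rho>3 \<in> ?R1 `` (?R3``{gs \<rho>3})" using \<open>gs \<rho>3 \<in> ?R3``{gs \<rho>3}\<close> by blast
    then have "gs \<rho>3 \<in> ?R1``{gs \<rho>1}" using eq by simp
    then have "(gs \<rho>1, gs \<rho>3) \<in> ?R1" by simp
    then have "\<forall>s\<in>S. (gs \<rho>1 s, gs \<rho>3 s) \<in> \<rho>1" using hat_iff[OF r1] by blast
    then have "(gs \<rho>1 s, gs \<rho>3 s) \<in> \<rho>1" using s by blast
    then show "(gs \<rho>3 s, gs \<rho>1 s) \<in> \<rho>1" using F_equiv[OF r1] unfolding equiv_def sym_def by blast
  qed
  moreover have "\<forall>\<rho>\<in>FF. gs \<rho> \<in> E \<and> x (hatrel T \<rho> E) = hatrel T \<rho> E``{gs \<rho>}" using gs by blast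
  ultimately show ?thesis by (intro exI[of _ gs]) blast
qed

lemma limit_fun:
  assumes gsE: "\<And>\<rho>. \<rho> \<in> FF \<Longrightarrow> gs \<rho> \<in> E"
    and compat: "\<And>\<rho>1 \<rho>3 s. \<rho>1 \<in> FF \<Longrightarrow> \<rho>3 \<in> FF \<Longrightarrow> \<rho>3 \<subseteq> \<rho>1 \<Longrightarrow> s \<in> S \<Longrightarrow> (gs \<rho>3 s, gs \<rho>1 s) \<in> \<rho>1"
  shows "\<exists>f\<in>endo T m. \<forall>\<rho>\<in>FF. \<forall>s\<in>S. (f s, gs \<rho> s) \<in> \<rho>"
proof -
  have ex: "\<exists>y. y \<in> S \<and> (\<forall>\<rho>\<in>FF. (y, gs \<rho> s) \<in> \<rho>)" if s: "s \<in> S" for s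
  proof -
    have "\<exists>y\<in>S. \<forall>\<rho>\<in>FF. (y, gs \<rho> s) \<in> \<rho>"
    proof (rule F_limit)
      fix \<rho> assume "\<rho> \<in> FF" then show "gs \<rho> s \<in> S" using E_maps gsE s by blast
    next
      fix \<rho>1 \<rho>3 assume "\<rho>1 \<in> FF" "\<rho>3 \<in> FF" "\<rho>3 \<subseteq> \<rho>1"
      then show "(gs \<rho>3 s, gs \<rho>1 s) \<in> \<rho>1" using compat s by blast
    qed
    then show ?thesis by blast
  qed
  define f where "f = (\<lambda>s\<in>S. SOME y. y \<in> S \<and> (\<forall>\<rho>\<in>FF. (y, gs \<rho> s) \<in> \<rho>))"
  have fs: "f s \<in> S \<and> (\<forall>\<rho>\<in>FF. (f s, gs \<rho> s) \<in> \<rho>)" if s: "s \<in> S" for s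
    unfolding f_def using someI_ex[OF ex[OF s]] s by simp
  have sym: "\<And>\<rho> a b. \<rho> \<in> FF \<Longrightarrow> (a,b) \<in> \<rho> \<Longrightarrow> (b,a) \<in> \<rho>"
    using F_equiv unfolding equiv_def sym_def by blast
  have trans: "\<And>\<rho> a b c. \<rho> \<in> FF \<Longrightarrow> (a,b) \<in> \<rho> \<Longrightarrow> (b,c) \<in> \<rho> \<Longrightarrow> (a,c) \<in> \<rho>"
    using F_equiv unfolding equiv_def trans_def by blast
  have ext: "f \<in> extensional S" unfolding f_def by simp
  have hom: "\<forall>x\<in>S. \<forall>y\<in>S. f (m x y) = m (f x) (f y)"
  proof (intro ballI)
    fix x y assume x: "x \<in> S" and y: "y \<in> S"
    have mS: "m x y \<in> S" using mult_in[OF x y] .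
    show "f (m x y) = m (f x) (f y)"
    proof (rule F_sep)
      show "f (m x y) \<in> S" using fs[OF mS] by blast
      show "m (f x) (f y) \<in> S" using fs[OF x] fs[OF y] mult_in by blast
      fix \<rho> assume r: "\<rho> \<in> FF"
      let ?g = "gs \<rho>"
      have g: "?g \<in> E" using gsE[OF r] .
      have 1: "(f (m x y), ?g (m x y)) \<in> \<rho>" using fs[OF mS] r by blast
      have 2: "?g (m x y) = m (?g x) (?g y)" using E_hom[OF g x y] .
      have fx: "(?g x, f x) \<in> \<rho>" using sym[OF r] fs[OF x] r by blast
      have fy: "(?g y, f y) \<in> \<rho>" using sym[OF r] fs[OF y] r by blast
      have 3: "(m (?g x) (?g y), m (f x) (?g y)) \<in> \<rho>"
        using oc_comp[OF F_oc[OF r] fx E_maps[OF g y]] by blast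
      have 4: "(m (f x) (?g y), m (f x) (f y)) \<in> \<rho>"
        using oc_comp[OF F_oc[OF r] fy] fs[OF x] by blast
      show "(f (m x y), m (f x) (f y)) \<in> \<rho>"
        using trans[OF r 1] 2 trans[OF r 3 4] by simp
    qed
  qed
  have cont: "continuous_map T T f"
    unfolding continuous_map_def
  proof (intro conjI allI impI)
    show "f \<in> S \<rightarrow> S" using fs by blast
    fix U assume U: "openin T U"
    show "openin T {x \<in> S. f x \<in> U}"
    proof (subst openin_subopen, intro ballI)
      fix s assume s: "s \<in> {x \<in> S. f x \<in> U}"
      then obtain \<rho> where r: "\<rho> \<in> FF" "\<rho>``{f s} \<subseteq> U" using F_nbhd_pt[OF U] by blast
      let ?g = "gs \<rho>"
      have g: "?g \<in> E" using gsE[OF r(1)] .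
      have sS: "s \<in> S" using s by blast
      have "\<rho>``{s} \<subseteq> {x \<in> S. f x \<in> U}"
      proof
        fix t assume t: "t \<in> \<rho>``{s}"
        then have st: "(s,t) \<in> \<rho>" by simp
        then have tS: "t \<in> S" using oc_sub[OF F_oc[OF r(1)]] by blast
        have a: "(f s, ?g s) \<in> \<rho>" using fs[OF sS] r(1) by blast
        have b: "(?g s, ?g t) \<in> \<rho>" using E_inv[OF r(1) g st] .
        have c: "(?g t, f t) \<in> \<rho>" using sym[OF r(1)] fs[OF tS] r(1) by blast
        have "(f s, f t) \<in> \<rho>" using trans[OF r(1) trans[OF r(1) a b] c] .
        then show "t \<in> {x \<in> S. f x \<in> U}" using r(2) tS by blast
      qed
      moreover have "s \<in> \<rho>``{s}" using equiv_class_self[OF F_equiv[OF r(1)] sS] .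
      moreover have "openin T (\<rho>``{s})" using oc_class_open[OF F_oc[OF r(1)] sS] .
      ultimately show "\<exists>T'. openin T T' \<and> s \<in> T' \<and> T' \<subseteq> {x \<in> S. f x \<in> U}" by blast
    qed
  qed
  have "f \<in> endo T m" unfolding endo_def using cont ext hom by blast
  then show ?thesis using fs by blast
qed

lemma canon_eq:
  assumes x: "x \<in> projlim E HH" and f: "f \<in> E"
    and gs: "\<And>\<rho>. \<rho> \<in> FF \<Longrightarrow> gs \<rho> \<in> E \<and> x (hatrel T \<rho> E) = hatrel T \<rho> E``{gs \<rho>}"
    and pw: "\<And>\<rho> s. \<rho> \<in> FF \<Longrightarrow> s \<in> S \<Longrightarrow> (f s, gs \<rho> s) \<in> \<rho>"
  shows "canon HH f = x"
proof
  fix R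
  have xP: "x \<in> (\<Pi>\<^sub>E R\<in>HH. E // R)" using x unfolding projlim_def mem_Collect_eq by (rule conjunct1)
  show "canon HH f R = x R"
  proof (cases "R \<in> HH")
    case False
    have "x R = undefined" using PiE_arb[OF xP False] .
    moreover have "canon HH f R = undefined" unfolding canon_def restrict_def using False by (rule if_not_P)
    ultimately show ?thesis by simp
  next
    case R: True
    then obtain \<rho> where r: "\<rho> \<in> FF" "R = hatrel T \<rho> E" by blast
    have "(f, gs \<rho>) \<in> hatrel T \<rho> E" unfolding hat_iff[OF r(1)] using f gs[OF r(1)] pw[OF r(1)] by blast
    then have "hatrel T \<rho> E``{f} = hatrel T \<rho> E``{gs \<rho>}" using equiv_class_eq[OF hat_equiv[OF r(1)]] by blast
    then show ?thesis using canon_at[OF R] gs[OF r(1)] r(2) by simp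
  qed
qed

end

lemma comp_op_pt: "x \<in> topspace T \<Longrightarrow> comp_op T f g x = f (g x)"
  unfolding comp_op_def compose_def by simp

context pf begin

lemma endo_cont: "f \<in> endo T m \<Longrightarrow> continuous_map T T f"
  unfolding endo_def by blast
lemma endo_maps: "f \<in> endo T m \<Longrightarrow> x \<in> S \<Longrightarrow> f x \<in> S"
proof -
  assume "f \<in> endo T m" "x \<in> S"
  then show ?thesis using endo_cont[of f] unfolding continuous_map_def by blast
qed
lemma endo_hom: "f \<in> endo T m \<Longrightarrow> x \<in> S \<Longrightarrow> y \<in> S \<Longrightarrow> f (m x y) = m (f x) (f y)"
  unfolding endo_def by blast

lemma endo_comp:
  assumes f: "f \<in> endo T m" and g: "g \<in> endo T m"
  shows "comp_op T f g \<in> endo T m"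
proof -
  have c: "continuous_map T T (comp_op T f g)"
    by (rule continuous_map_eq[OF continuous_map_compose[OF endo_cont[OF g] endo_cont[OF f]]])
       (simp add: comp_op_pt)
  have e: "comp_op T f g \<in> extensional S" unfolding comp_op_def by simp
  have h: "\<forall>x\<in>S. \<forall>y\<in>S. comp_op T f g (m x y) = m (comp_op T f g x) (comp_op T f g y)"
  proof (intro ballI)
    fix x y assume x: "x \<in> S" and y: "y \<in> S"
    have "comp_op T f g (m x y) = f (g (m x y))" using comp_op_pt mult_in[OF x y] by metis
    also have "\<dots> = f (m (g x) (g y))" using endo_hom[OF g x y] by simp
    also have "\<dots> = m (f (g x)) (f (g y))" using endo_hom[OF f endo_maps[OF g x] endo_maps[OF g y]] .
    finally show "comp_op T f g (m x y) = m (comp_op T f g x) (comp_op T f g y)"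
      using comp_op_pt x y by metis
  qed
  show ?thesis unfolding endo_def using c e h by blast
qed

lemma aut_comp:
  assumes f: "f \<in> aut T m" and g: "g \<in> aut T m"
  shows "comp_op T f g \<in> aut T m"
proof -
  have "f \<in> endo T m" "g \<in> endo T m" using f g unfolding aut_def by blast+
  then have 1: "comp_op T f g \<in> endo T m" by (rule endo_comp)
  have "homeomorphic_map T T f" "homeomorphic_map T T g" using f g unfolding aut_def by blast+
  then have "homeomorphic_map T T (f \<circ> g)" using homeomorphic_map_compose by blast
  then have "homeomorphic_map T T (comp_op T f g)"
    by (rule homeomorphic_map_eq) (simp add: comp_op_pt)
  then show ?thesis using 1 unfolding aut_def by blast
qed

lemma aut_inv:
  assumes f: "f \<in> aut T m"
  shows "restrict (inv_into S f) S \<in> aut T m \<and> (\<forall>x\<in>S. restrict (inv_into S f) S (f x) = x)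
     \<and> (\<forall>y\<in>S. f (restrict (inv_into S f) S y) = y)"
proof -
  let ?h = "restrict (inv_into S f) S"
  have fe: "f \<in> endo T m" and hf: "homeomorphic_map T T f" using f unfolding aut_def by blast+
  have img: "f ` S = S" and inj: "inj_on f S" using hf unfolding homeomorphic_eq_everything_map by blast+
  have hmaps: "\<And>y. y \<in> S \<Longrightarrow> ?h y \<in> S" using inv_into_into[of _ f S] img by simp
  have l: "\<forall>x\<in>S. ?h (f x) = x" using inj img inv_into_f_f by fastforce
  have r: "\<forall>y\<in>S. f (?h y) = y" using img f_inv_into_f[of _ f S] by simp
  obtain g' where g': "homeomorphic_maps T T f g'" using hf homeomorphic_map_maps by blast
  have hg': "homeomorphic_map T T g'" using g' homeomorphic_maps_map by blast
  have g'l: "\<forall>x\<in>S. g' (f x) = x" using g' unfolding homeomorphic_maps_def by blast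
  have hh: "homeomorphic_map T T ?h"
  proof (rule homeomorphic_map_eq[OF hg'])
    fix y assume y: "y \<in> S"
    have "g' y = g' (f (?h y))" using r y by simp
    also have "\<dots> = ?h y" using g'l hmaps[OF y] by blast
    finally show "g' y = ?h y" .
  qed
  have hom: "\<forall>x\<in>S. \<forall>y\<in>S. ?h (m x y) = m (?h x) (?h y)"
  proof (intro ballI)
    fix x y assume x: "x \<in> S" and y: "y \<in> S"
    have zS: "m (?h x) (?h y) \<in> S" using mult_in hmaps x y by blast
    have "f (m (?h x) (?h y)) = m (f (?h x)) (f (?h y))" using endo_hom[OF fe hmaps[OF x] hmaps[OF y]] .
    also have "\<dots> = m x y" using r x y by simp
    finally have "f (m (?h x) (?h y)) = m x y" .
    then have "?h (m x y) = ?h (f (m (?h x) (?h y)))" by simp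
    also have "\<dots> = m (?h x) (?h y)" using l zS by blast
    finally show "?h (m x y) = m (?h x) (?h y)" .
  qed
  have "?h \<in> endo T m" unfolding endo_def using homeomorphic_imp_continuous_map[OF hh] hom by simp
  then have "?h \<in> aut T m" using hh unfolding aut_def by blast
  then show ?thesis using l r by blast
qed

end

context pfE begin

lemma rmap_aut:
  assumes EA: "E = aut T m" and r: "\<rho> \<in> FF" and f: "f \<in> E"
  shows "r_map T \<rho> f \<in> aut (quot_top T \<rho>) (qmult \<rho> m)"
proof -
  let ?h = "restrict (inv_into S f) S"
  have hA: "?h \<in> E" and l: "\<forall>x\<in>S. ?h (f x) = x" and rr: "\<forall>y\<in>S. f (?h y) = y"
    using aut_inv[of f] f EA by auto
  have ef: "r_map T \<rho> f \<in> endo (quot_top T \<rho>) (qmult \<rho> m)" by (rule rmap_endo[OF r f])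
  have eh: "r_map T \<rho> ?h \<in> endo (quot_top T \<rho>) (qmult \<rho> m)" by (rule rmap_endo[OF r hA])
  have e: "equiv S \<rho>" using F_equiv[OF r] .
  have tQ: "topspace (quot_top T \<rho>) = S//\<rho>" using topspace_quot_top[OF e] .
  have "homeomorphic_maps (quot_top T \<rho>) (quot_top T \<rho>) (r_map T \<rho> f) (r_map T \<rho> ?h)"
    unfolding homeomorphic_maps_def tQ
  proof (intro conjI ballI)
    show "continuous_map (quot_top T \<rho>) (quot_top T \<rho>) (r_map T \<rho> f)" using ef unfolding endo_def by blast
    show "continuous_map (quot_top T \<rho>) (quot_top T \<rho>) (r_map T \<rho> ?h)" using eh unfolding endo_def by blast
  next
    fix C assume "C \<in> S//\<rho>"
    then obtain s where s: "s \<in> S" "C = \<rho>``{s}" by (auto elim: quotientE)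
    have "r_map T \<rho> ?h (r_map T \<rho> f C) = r_map T \<rho> ?h (\<rho>``{f s})" using rmap_class[OF r f s(1)] s(2) by simp
    also have "\<dots> = \<rho>``{?h (f s)}" using rmap_class[OF r hA E_maps[OF f s(1)]] .
    also have "\<dots> = C" using l s by simp
    finally show "r_map T \<rho> ?h (r_map T \<rho> f C) = C" .
  next
    fix C assume "C \<in> S//\<rho>"
    then obtain s where s: "s \<in> S" "C = \<rho>``{s}" by (auto elim: quotientE)
    have "r_map T \<rho> f (r_map T \<rho> ?h C) = r_map T \<rho> f (\<rho>``{?h s})" using rmap_class[OF r hA s(1)] s(2) by simp
    also have "\<dots> = \<rho>``{f (?h s)}" using rmap_class[OF r f E_maps[OF hA s(1)]] .
    also have "\<dots> = C" using rr s by simp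
    finally show "r_map T \<rho> f (r_map T \<rho> ?h C) = C" .
  qed
  then have "homeomorphic_map (quot_top T \<rho>) (quot_top T \<rho>) (r_map T \<rho> f)"
    using homeomorphic_maps_imp_map by blast
  then show ?thesis using ef unfolding aut_def by blast
qed

lemma surj_endo:
  assumes EE: "E = endo T m" and x: "x \<in> projlim E HH"
  shows "x \<in> canon HH ` E"
proof -
  from sel[OF x] obtain gs where gsc: "(\<forall>\<rho>\<in>FF. gs \<rho> \<in> E \<and> x (hatrel T \<rho> E) = hatrel T \<rho> E``{gs \<rho>}) \<and>
     (\<forall>\<rho>1\<in>FF. \<forall>\<rho>3\<in>FF. \<rho>3 \<subseteq> \<rho>1 \<longrightarrow> (\<forall>s\<in>S. (gs \<rho>3 s, gs \<rho>1 s) \<in> \<rho>1))"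
    by (rule exE)
  note gs = conjunct1[OF gsc] and comp = conjunct2[OF gsc]
  have "\<exists>f\<in>endo T m. \<forall>\<rho>\<in>FF. \<forall>s\<in>S. (f s, gs \<rho> s) \<in> \<rho>"
  proof (rule limit_fun)
    fix \<rho> assume "\<rho> \<in> FF" then show "gs \<rho> \<in> E" using gs by blast
  next
    fix \<rho>1 \<rho>3 s assume "\<rho>1 \<in> FF" "\<rho>3 \<in> FF" "\<rho>3 \<subseteq> \<rho>1" "s \<in> S"
    then show "(gs \<rho>3 s, gs \<rho>1 s) \<in> \<rho>1" using comp by blast
  qed
  then obtain f where f: "f \<in> endo T m" and pw: "\<forall>\<rho>\<in>FF. \<forall>s\<in>S. (f s, gs \<rho> s) \<in> \<rho>"
    by (rule bexE)
  have fE: "f \<in> E" using f EE by simp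
  have "canon HH f = x"
  proof (rule canon_eq[OF x fE])
    fix \<rho> assume "\<rho> \<in> FF" then show "gs \<rho> \<in> E \<and> x (hatrel T \<rho> E) = hatrel T \<rho> E``{gs \<rho>}" using gs by blast
  next
    fix \<rho> s assume "\<rho> \<in> FF" "s \<in> S" then show "(f s, gs \<rho> s) \<in> \<rho>" using pw by blast
  qed
  then show ?thesis using fE by blast
qed

lemma surj_aut:
  assumes EA: "E = aut T m" and x: "x \<in> projlim E HH"
  shows "x \<in> canon HH ` E"
proof -
  from sel[OF x] obtain gs where gsc: "(\<forall>\<rho>\<in>FF. gs \<rho> \<in> E \<and> x (hatrel T \<rho> E) = hatrel T \<rho> E``{gs \<rho>}) \<and>
     (\<forall>\<rho>1\<in>FF. \<forall>\<rho>3\<in>FF. \<rho>3 \<subseteq> \<rho>1 \<longrightarrow> (\<forall>s\<in>S. (gs \<rho>3 s, gs \<rho>1 s) \<in> \<rho>1))"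
    by (rule exE)
  note gs = conjunct1[OF gsc] and comp = conjunct2[OF gsc]
  have "\<exists>f\<in>endo T m. \<forall>\<rho>\<in>FF. \<forall>s\<in>S. (f s, gs \<rho> s) \<in> \<rho>"
  proof (rule limit_fun)
    fix \<rho> assume "\<rho> \<in> FF" then show "gs \<rho> \<in> E" using gs by blast
  next
    fix \<rho>1 \<rho>3 s assume "\<rho>1 \<in> FF" "\<rho>3 \<in> FF" "\<rho>3 \<subseteq> \<rho>1" "s \<in> S"
    then show "(gs \<rho>3 s, gs \<rho>1 s) \<in> \<rho>1" using comp by blast
  qed
  then obtain f where f: "f \<in> endo T m" and pw: "\<forall>\<rho>\<in>FF. \<forall>s\<in>S. (f s, gs \<rho> s) \<in> \<rho>"
    by (rule bexE)
  define hs where "hs \<rho> = restrict (inv_into S (gs \<rho>)) S" for \<rho>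
  have hsp: "hs \<rho> \<in> E \<and> (\<forall>x\<in>S. hs \<rho> (gs \<rho> x) = x) \<and> (\<forall>y\<in>S. gs \<rho> (hs \<rho> y) = y)" if r: "\<rho> \<in> FF" for \<rho>
    using aut_inv[of "gs \<rho>"] gs r EA unfolding hs_def by auto
  have sym: "\<And>\<rho> a b. \<rho> \<in> FF \<Longrightarrow> (a,b) \<in> \<rho> \<Longrightarrow> (b,a) \<in> \<rho>"
    using F_equiv unfolding equiv_def sym_def by blast
  have trans: "\<And>\<rho> a b c. \<rho> \<in> FF \<Longrightarrow> (a,b) \<in> \<rho> \<Longrightarrow> (b,c) \<in> \<rho> \<Longrightarrow> (a,c) \<in> \<rho>"
    using F_equiv unfolding equiv_def trans_def by blast
  have fmaps: "\<And>a. a \<in> S \<Longrightarrow> f a \<in> S" using endo_maps[OF f] .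
  have inj: "inj_on f S"
  proof (rule inj_onI)
    fix a b assume a: "a \<in> S" and b: "b \<in> S" and eq: "f a = f b"
    show "a = b"
    proof (rule F_sep[OF a b])
      fix \<rho> assume r: "\<rho> \<in> FF"
      let ?g = "gs \<rho>"
      have 1: "(?g a, f a) \<in> \<rho>" using sym[OF r] pw r a by blast
      have 2: "(f b, ?g b) \<in> \<rho>" using pw r b by blast
      have "(?g a, ?g b) \<in> \<rho>" using trans[OF r 1] 2 eq by simp
      then have "(hs \<rho> (?g a), hs \<rho> (?g b)) \<in> \<rho>" using E_inv[OF r] hsp[OF r] by blast
      then show "(a, b) \<in> \<rho>" using hsp[OF r] a b by simp
    qed
  qed
  have img: "f ` S = S"
  proof
    show "f ` S \<subseteq> S" using fmaps by blast
    show "S \<subseteq> f ` S"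
    proof
      fix y assume y: "y \<in> S"
      have "\<exists>z\<in>S. \<forall>\<rho>\<in>FF. (z, hs \<rho> y) \<in> \<rho>"
      proof (rule F_limit)
        fix \<rho> assume r: "\<rho> \<in> FF"
        then show "hs \<rho> y \<in> S" using E_maps hsp[OF r] y by blast
      next
        fix \<rho>1 \<rho>3 assume r1: "\<rho>1 \<in> FF" and r3: "\<rho>3 \<in> FF" and sub: "\<rho>3 \<subseteq> \<rho>1"
        have h1S: "hs \<rho>1 y \<in> S" using E_maps hsp[OF r1] y by blast
        have h3S: "hs \<rho>3 y \<in> S" using E_maps hsp[OF r3] y by blast
        have c: "(gs \<rho>3 (hs \<rho>1 y), gs \<rho>1 (hs \<rho>1 y)) \<in> \<rho>1" using comp r1 r3 sub h1S by blast
        have "gs \<rho>1 (hs \<rho>1 y) = y" using hsp[OF r1] y by blast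
        moreover have "gs \<rho>3 (hs \<rho>3 y) = y" using hsp[OF r3] y by blast
        ultimately have "(gs \<rho>3 (hs \<rho>1 y), gs \<rho>3 (hs \<rho>3 y)) \<in> \<rho>1" using c by simp
        then have "(hs \<rho>3 (gs \<rho>3 (hs \<rho>1 y)), hs \<rho>3 (gs \<rho>3 (hs \<rho>3 y))) \<in> \<rho>1"
          using E_inv[OF r1] hsp[OF r3] by blast
        then have "(hs \<rho>1 y, hs \<rho>3 y) \<in> \<rho>1" using hsp[OF r3] h1S h3S by simp
        then show "(hs \<rho>3 y, hs \<rho>1 y) \<in> \<rho>1" using sym[OF r1] by blast
      qed
      then obtain z where z: "z \<in> S" "\<forall>\<rho>\<in>FF. (z, hs \<rho> y) \<in> \<rho>" by blast
      have "f z = y"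
      proof (rule F_sep[OF fmaps[OF z(1)] y])
        fix \<rho> assume r: "\<rho> \<in> FF"
        have gE: "gs \<rho> \<in> E" using gs r by blast
        have 1: "(f z, gs \<rho> z) \<in> \<rho>" using pw r z(1) by blast
        have "(gs \<rho> z, gs \<rho> (hs \<rho> y)) \<in> \<rho>" using E_inv[OF r gE] z(2) r by blast
        then have 2: "(gs \<rho> z, y) \<in> \<rho>" using hsp[OF r] y by simp
        show "(f z, y) \<in> \<rho>" using trans[OF r 1 2] .
      qed
      then show "y \<in> f ` S" using z(1) by blast
    qed
  qed
  have haus: "Hausdorff_space T" using prof unfolding profinite_def by (elim conjE)
  have "homeomorphic_map T T f"
    using continuous_imp_homeomorphic_map[OF endo_cont[OF f] cpt haus img inj] .
  then have fE: "f \<in> E" using f EA unfolding aut_def by blast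
  have "canon HH f = x"
  proof (rule canon_eq[OF x fE])
    fix \<rho> assume "\<rho> \<in> FF" then show "gs \<rho> \<in> E \<and> x (hatrel T \<rho> E) = hatrel T \<rho> E``{gs \<rho>}" using gs by blast
  next
    fix \<rho> s assume "\<rho> \<in> FF" "s \<in> S" then show "(f s, gs \<rho> s) \<in> \<rho>" using pw by blast
  qed
  then show ?thesis using fE by blast
qed

end

theorem theorem9:
  fixes T :: "'a topology" and m :: "'a \<Rightarrow> 'a \<Rightarrow> 'a" and \<F> :: "'a rel set"
  assumes "profinite T m"
  shows "(fundamental_system T m \<F> \<and> (\<forall>\<rho>\<in>\<F>. fully_invariant T m \<rho>) \<longrightarrow>
            projlim_conclusion T \<F> (endo T m) (\<lambda>\<rho>. endo (quot_top T \<rho>) (qmult \<rho> m)))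
       \<and> (fundamental_system T m \<F> \<and> (\<forall>\<rho>\<in>\<F>. characteristic T m \<rho>) \<longrightarrow>
            projlim_conclusion T \<F> (aut T m) (\<lambda>\<rho>. aut (quot_top T \<rho>) (qmult \<rho> m)))"
proof (intro conjI impI)
  assume a: "fundamental_system T m \<F> \<and> (\<forall>\<rho>\<in>\<F>. fully_invariant T m \<rho>)"
  interpret pf T m \<F> using assms a by unfold_locales blast+
  interpret pfE T m \<F> "endo T m"
  proof unfold_locales
    show "endo T m \<subseteq> endo T m" by simp
    show "\<And>f g. f \<in> endo T m \<Longrightarrow> g \<in> endo T m \<Longrightarrow> comp_op T f g \<in> endo T m" by (rule endo_comp)
    show "\<And>\<rho> g x y. \<rho> \<in> \<F> \<Longrightarrow> g \<in> endo T m \<Longrightarrow> (x, y) \<in> \<rho> \<Longrightarrow> (g x, g y) \<in> \<rho>"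
      using a unfolding fully_invariant_def by blast
  qed
  show "projlim_conclusion T \<F> (endo T m) (\<lambda>\<rho>. endo (quot_top T \<rho>) (qmult \<rho> m))"
  proof (rule generic)
    show "\<And>\<rho> f. \<rho> \<in> \<F> \<Longrightarrow> f \<in> endo T m \<Longrightarrow> r_map T \<rho> f \<in> endo (quot_top T \<rho>) (qmult \<rho> m)"
      by (rule rmap_endo)
    show "projlim (endo T m) ((\<lambda>\<rho>. hatrel T \<rho> (endo T m)) ` \<F>) \<subseteq> canon ((\<lambda>\<rho>. hatrel T \<rho> (endo T m)) ` \<F>) ` endo T m"
      using surj_endo by blast
  qed
next
  assume a: "fundamental_system T m \<F> \<and> (\<forall>\<rho>\<in>\<F>. characteristic T m \<rho>)"
  interpret pf T m \<F> using assms a by unfold_locales blast+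
  interpret pfE T m \<F> "aut T m"
  proof unfold_locales
    show "aut T m \<subseteq> endo T m" unfolding aut_def by blast
    show "\<And>f g. f \<in> aut T m \<Longrightarrow> g \<in> aut T m \<Longrightarrow> comp_op T f g \<in> aut T m" by (rule aut_comp)
    show "\<And>\<rho> g x y. \<rho> \<in> \<F> \<Longrightarrow> g \<in> aut T m \<Longrightarrow> (x, y) \<in> \<rho> \<Longrightarrow> (g x, g y) \<in> \<rho>"
      using a unfolding characteristic_def by blast
  qed
  show "projlim_conclusion T \<F> (aut T m) (\<lambda>\<rho>. aut (quot_top T \<rho>) (qmult \<rho> m))"
  proof (rule generic)
    show "\<And>\<rho> f. \<rho> \<in> \<F> \<Longrightarrow> f \<in> aut T m \<Longrightarrow> r_map T \<rho> f \<in> aut (quot_top T \<rho>) (qmult \<rho> m)"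
      by (rule rmap_aut[OF refl])
    show "projlim (aut T m) ((\<lambda>\<rho>. hatrel T \<rho> (aut T m)) ` \<F>) \<subseteq> canon ((\<lambda>\<rho>. hatrel T \<rho> (aut T m)) ` \<F>) ` aut T m"
      using surj_aut[OF refl] by blast
  qed
qed

end
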